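(* Suppose the embedded jump chain $(\tilde\xi_n)$ is recurrent. (1) The following are equivalent: (i) there exist $f\in\mathrm{Dom}_+(\Gamma)$ with $\sup_{x\in\mathbb X}f(x)=b<\infty$, a number $a\in(0,b)$ such that $\{f\le a\}$ is finite, and $\epsilon>0$ such that $\Gamma f(x)\le-\epsilon$ for all $x\notin\{f\le a\}$; (ii) for every nonempty finite $A\subset\mathbb X$ there exists a constant $C_A>0$ such that $\mathbb E_x\tau_A\le C_A$ for all $x\notin A$. (2) Let $f\in\mathrm{Dom}_+(\Gamma)$ with $f\to\infty$, and suppose there exist constants $a>0$, $c>0$, $\epsilon>0$ and $r>1$ such that $f^r\in\mathrm{Dom}_+(\Gamma)$, $\Gamma f(x)\ge-\epsilon$ for all $x\notin\{f\le a\}$, and $\Gamma f^r(x)\le c\,f^{r-1}(x)$ for all $x\notin\{f\le a\}$. Then the chain does not implode towards $\{f\le a\}$, i.e.\ there is no $K>0$ with $\mathbb E_x\tau_{\{f\le a\}}\le K$ for all $x\notin\{f\le a\}$.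
   Context: Let $\mathbb X$ be a countably infinite set and $\Gamma=(\Gamma_{xy})_{x,y\in\mathbb X}$ a matrix with $\Gamma_{xy}\ge0$ for $y\ne x$, $\gamma_x:=\sum_{y\ne x}\Gamma_{xy}$, $\Gamma_{xx}=-\gamma_x$, and $0<\gamma_x<\infty$ for all $x$. Let $P_{xy}=\Gamma_{xy}/\gamma_x$ for $y\neq x$ and $P_{xx}=0$; the discrete-time chain $(\tilde\xi_n)$ with transition matrix $P$ (embedded jump chain) is assumed irreducible. The continuous-time Markov chain $(\xi_t)_{t\ge0}$ with generator $\Gamma$: conditionally on $\tilde\xi$, holding times $\sigma_n$ ($n\ge1$) are independent exponential with parameter $\gamma_{\tilde\xi_{n-1}}$; $J_0=0$, $J_n=\sigma_1+\dots+\sigma_n$, $\zeta=\lim_nJ_n$; $\xi_t=\tilde\xi_n$ on $[J_n,J_{n+1})$, $\xi_t=\partial$ for $t\ge\zeta$. $\mathbb E_x$ refers to $\xi_0=x$; $\tau_A=\inf\{t\ge0:\xi_t\in A\}$. $\mathrm{Dom}(\Gamma)=\{f:\mathbb X\to\mathbb R:\ \sum_{y\ne x}\Gamma_{xy}|f(y)|<\infty\ \forall x\}$, $\mathrm{Dom}_+(\Gamma)$ its non-negative elements, $\Gamma f(x)=\sum_{y}\Gamma_{xy}f(y)$. $\{f\le\alpha\}:=\{x:f(x)\le\alpha\}$; "$f\to\infty$" means $\{f\le n\}$ is finite for all $n\in\mathbb N$. The chain implodes towards a proper subset $A$ if there is $K>0$ with $\mathbb E_x\tau_A\le K$ for all $x\in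 A^c$. *)

theory Defs
  imports "HOL-Probability.Probability"
begin

definition gam :: "('a \<Rightarrow> 'a \<Rightarrow> real) \<Rightarrow> 'a \<Rightarrow> real" where
  "gam G x = (\<Sum>\<^sub>\<infinity> y\<in>-{x}. G x y)"

definition is_generator :: "('a \<Rightarrow> 'a \<Rightarrow> real) \<Rightarrow> bool" where
  "is_generator G \<longleftrightarrow>
     (\<forall>x y. y \<noteq> x \<longrightarrow> 0 \<le> G x y) \<and>
     (\<forall>x. G x summable_on (-{x})) \<and>
     (\<forall>x. 0 < gam G x) \<and>
     (\<forall>x. G x x = - gam G x)"

definition jumpP :: "('a \<Rightarrow> 'a \<Rightarrow> real) \<Rightarrow> 'a \<Rightarrow> 'a \<Rightarrow> real" where
  "jumpP G x y = (if y = x then 0 else G x y / gam G x)"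

definition jump_irreducible :: "('a \<Rightarrow> 'a \<Rightarrow> real) \<Rightarrow> bool" where
  "jump_irreducible G \<longleftrightarrow> (\<forall>x y. (\<lambda>u v. 0 < jumpP G u v)\<^sup>*\<^sup>* x y)"

definition in_Dom :: "('a \<Rightarrow> 'a \<Rightarrow> real) \<Rightarrow> ('a \<Rightarrow> real) \<Rightarrow> bool" where
  "in_Dom G f \<longleftrightarrow> (\<forall>x. (\<lambda>y. G x y * \<bar>f y\<bar>) summable_on (-{x}))"

definition in_Dom_plus :: "('a \<Rightarrow> 'a \<Rightarrow> real) \<Rightarrow> ('a \<Rightarrow> real) \<Rightarrow> bool" where
  "in_Dom_plus G f \<longleftrightarrow> in_Dom G f \<and> (\<forall>x. 0 \<le> f x)"

definition gen_apply :: "('a \<Rightarrow> 'a \<Rightarrow> real) \<Rightarrow> ('a \<Rightarrow> real) \<Rightarrow> 'a \<Rightarrow> real" where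
  "gen_apply G f x = G x x * f x + (\<Sum>\<^sub>\<infinity> y\<in>-{x}. G x y * f y)"

text \<open>The underlying probability space is an
  i.i.d. sequence of pairs of independent uniform random variables on (0,1): the first
  component selects the next state of the jump chain (inverse-CDF along a fixed
  enumeration of the state space), the second produces the Exp(1) variable -ln U, which
  divided by the current rate gives the holding time.\<close>

definition unif01 :: "real measure" where
  "unif01 = uniform_measure lborel {0<..<1}"

definition Omega :: "(real \<times> real) stream measure" where
  "Omega = stream_space (unif01 \<Otimes>\<^sub>M unif01)"

definition enum_state :: "nat \<Rightarrow> 'a::countable" where
  "enum_state = from_nat_into (UNIV :: 'a set)"

definition next_state :: "('a::countable \<Rightarrow> 'a \<Rightarrow> real) \<Rightarrow> 'a \<Rightarrow> real \<Rightarrow> 'a" where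
  "next_state G x u =
     enum_state (LEAST k. u < (\<Sum>j\<le>k. jumpP G x (enum_state j)))"

primrec jump_chain :: "('a::countable \<Rightarrow> 'a \<Rightarrow> real) \<Rightarrow> 'a \<Rightarrow> (real \<times> real) stream \<Rightarrow> nat \<Rightarrow> 'a" where
  "jump_chain G x \<omega> 0 = x"
| "jump_chain G x \<omega> (Suc n) = next_state G (jump_chain G x \<omega> n) (fst (\<omega> !! n))"

text \<open>holding_time G x w n is sigma_(n+1), with parameter gamma of the n-th state.\<close>
definition holding_time :: "('a::countable \<Rightarrow> 'a \<Rightarrow> real) \<Rightarrow> 'a \<Rightarrow> (real \<times> real) stream \<Rightarrow> nat \<Rightarrow> real" where
  "holding_time G x \<omega> n = - ln (snd (\<omega> !! n)) / gam G (jump_chain G x \<omega> n)"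

definition jump_time :: "('a::countable \<Rightarrow> 'a \<Rightarrow> real) \<Rightarrow> 'a \<Rightarrow> (real \<times> real) stream \<Rightarrow> nat \<Rightarrow> real" where
  "jump_time G x \<omega> n = (\<Sum>k<n. holding_time G x \<omega> k)"

text \<open>Continuous-time chain; None plays the role of the cemetery state after explosion.\<close>
definition ctmc :: "('a::countable \<Rightarrow> 'a \<Rightarrow> real) \<Rightarrow> 'a \<Rightarrow> (real \<times> real) stream \<Rightarrow> real \<Rightarrow> 'a option" where
  "ctmc G x \<omega> t =
     (if \<exists>n. jump_time G x \<omega> n \<le> t \<and> t < jump_time G x \<omega> (Suc n)
      then Some (jump_chain G x \<omega> (THE n. jump_time G x \<omega> n \<le> t \<and> t < jump_time G x \<omega> (Suc n)))
      else None)"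

text \<open>Hitting time of A (value infinity if A is never hit).\<close>
definition hitting_time :: "('a::countable \<Rightarrow> 'a \<Rightarrow> real) \<Rightarrow> 'a set \<Rightarrow> 'a \<Rightarrow> (real \<times> real) stream \<Rightarrow> ennreal" where
  "hitting_time G A x \<omega> =
     (INF t \<in> {t. 0 \<le> t \<and> (\<exists>y\<in>A. ctmc G x \<omega> t = Some y)}. ennreal t)"

definition exp_hitting_time :: "('a::countable \<Rightarrow> 'a \<Rightarrow> real) \<Rightarrow> 'a set \<Rightarrow> 'a \<Rightarrow> ennreal" where
  "exp_hitting_time G A x = (\<integral>\<^sup>+ \<omega>. hitting_time G A x \<omega> \<partial>Omega)"

definition jump_recurrent :: "('a::countable \<Rightarrow> 'a \<Rightarrow> real) \<Rightarrow> bool" where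
  "jump_recurrent G \<longleftrightarrow>
     (\<forall>x. emeasure Omega {\<omega> \<in> space Omega. \<exists>n>0. jump_chain G x \<omega> n = x} = 1)"

end

theory Submission
  imports Defs "HOL-Real_Asymp.Real_Asymp"
begin

lemma lnint: "(\<integral>\<^sup>+(v::real). ennreal (- ln v) * indicator {0<..<1} v \<partial>lborel) = 1"
proof -
  have d: "\<And>x. 0 < ereal x \<Longrightarrow> ereal x < 1 \<Longrightarrow> DERIV (\<lambda>v. v - v * ln v) x :> - ln x"
    by (auto intro!: derivative_eq_intros)
  have c: "\<And>x. 0 < ereal x \<Longrightarrow> ereal x < 1 \<Longrightarrow> isCont (\<lambda>v. - ln v) x"
    by (auto intro!: continuous_intros)
  have n: "AE x in lborel. 0 < ereal x \<longrightarrow> ereal x < 1 \<longrightarrow> 0 \<le> - ln x" by auto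
  have l0: "(((\<lambda>v. v - v * ln v) \<circ> real_of_ereal) \<longlongrightarrow> 0) (at_right 0)"
      unfolding zero_ereal_def ereal_tendsto_simps
      by real_asymp
  have l1: "(((\<lambda>v. v - v * ln v) \<circ> real_of_ereal) \<longlongrightarrow> 1) (at_left 1)"
      unfolding one_ereal_def ereal_tendsto_simps
      by real_asymp
  note I = interval_integral_FTC_nonneg[of 0 1, OF _ d c n l0 l1]
  have si: "set_integrable lborel {0<..<1} (\<lambda>v::real. - ln v)"
    using I(1) by (simp add: zero_ereal_def one_ereal_def)
  have iv: "(LINT v:{0<..<1}|lborel. - ln (v::real)) = 1"
    using I(2) by (simp add: interval_lebesgue_integral_def zero_ereal_def one_ereal_def)
  have "(\<integral>\<^sup>+v. ennreal (- ln v) * indicator {0<..<1} v \<partial>lborel)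
      = (\<integral>\<^sup>+v. ennreal (indicator {0<..<1} v *\<^sub>R (- ln v)) \<partial>lborel)"
    by (intro nn_integral_cong) (auto split: split_indicator)
  also have "\<dots> = ennreal (LINT v:{0<..<1}|lborel. - ln v)"
    unfolding set_lebesgue_integral_def
    using si unfolding set_integrable_def
    by (intro nn_integral_eq_integral) (auto split: split_indicator)
  finally show ?thesis using iv by simp
qed


lemma nn_count_infsum:
  fixes h :: "'b \<Rightarrow> real"
  assumes "\<And>y. y \<in> S \<Longrightarrow> 0 \<le> h y" "h summable_on S"
  shows "(\<integral>\<^sup>+y. ennreal (h y) \<partial>count_space S) = ennreal (infsum h S)"
proof -
  have "Infinite_Sum.abs_summable_on h S"
    using assms(2) summable_on_iff_abs_summable_on_real by blast
  then have a: "Infinite_Set_Sum.abs_summable_on h S"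
    using abs_summable_equivalent by blast
  show ?thesis
    using nn_integral_conv_infsetsum[OF a] infsetsum_infsum[OF a] assms(1) by simp
qed

lemma nn_count_infsum_UNIV:
  fixes h :: "'b \<Rightarrow> real"
  assumes "\<And>y. y \<in> S \<Longrightarrow> 0 \<le> h y" "h summable_on S"
  shows "(\<integral>\<^sup>+y. ennreal (h y) * indicator S y \<partial>count_space UNIV) = ennreal (infsum h S)"
  using nn_count_infsum[OF assms] by (simp add: nn_integral_count_space_indicator)

lemma summable_on_cdiv:
  fixes f :: "'b \<Rightarrow> real"
  shows "f summable_on A \<Longrightarrow> (\<lambda>x. f x / c) summable_on A"
  by (simp add: divide_inverse summable_on_cmult_left)

lemma infsum_cdiv:
  fixes f :: "'b \<Rightarrow> real"
  shows "infsum (\<lambda>x. f x / c) A = infsum f A / c"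
  by (simp add: divide_inverse infsum_cmult_left')

locale gctx =
  fixes G :: "'a::countable \<Rightarrow> 'a \<Rightarrow> real"
  assumes gen: "is_generator G"
begin

lemma gam_pos: "0 < gam G x" using gen by (simp add: is_generator_def)
lemma G_nonneg: "y \<noteq> x \<Longrightarrow> 0 \<le> G x y" using gen by (simp add: is_generator_def)
lemma G_summ: "G x summable_on -{x}" using gen by (simp add: is_generator_def)
lemma G_diag: "G x x = - gam G x" using gen by (simp add: is_generator_def)

lemma P_nonneg: "0 \<le> jumpP G x y"
  unfolding jumpP_def using G_nonneg gam_pos by (auto intro!: divide_nonneg_pos)
lemma P_diag[simp]: "jumpP G x x = 0" by (simp add: jumpP_def)

lemma kernel_sum:
  fixes g :: "'a \<Rightarrow> real"
  assumes g: "\<And>y. 0 \<le> g y" and s: "(\<lambda>y. G x y * g y) summable_on -{x}"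
  shows "(\<integral>\<^sup>+y. ennreal (jumpP G x y) * ennreal (g y) \<partial>count_space UNIV)
       = ennreal (infsum (\<lambda>y. G x y * g y) (-{x}) / gam G x)"
proof -
  have "(\<integral>\<^sup>+y. ennreal (jumpP G x y) * ennreal (g y) \<partial>count_space UNIV)
      = (\<integral>\<^sup>+y. ennreal (G x y * g y / gam G x) * indicator (-{x}) y \<partial>count_space UNIV)"
  proof (intro nn_integral_cong)
    fix y
    have "y \<noteq> x \<Longrightarrow> ennreal (G x y / gam G x) * ennreal (g y) = ennreal (G x y * g y / gam G x)"
      using G_nonneg[of y x] gam_pos[of x]
      by (subst ennreal_mult'[symmetric]) (auto intro!: divide_nonneg_pos)
    then show "ennreal (jumpP G x y) * ennreal (g y) = ennreal (G x y * g y / gam G x) * indicator (-{x}) y"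
      by (auto simp: jumpP_def split: split_indicator)
  qed
  also have "\<dots> = ennreal (infsum (\<lambda>y. G x y * g y / gam G x) (-{x}))"
    using gam_pos G_nonneg g s
    by (intro nn_count_infsum_UNIV) (auto intro!: summable_on_cdiv divide_nonneg_pos)
  also have "infsum (\<lambda>y. G x y * g y / gam G x) (-{x}) = infsum (\<lambda>y. G x y * g y) (-{x}) / gam G x"
    by (rule infsum_cdiv) 
  finally show ?thesis .
qed

lemma kernel_one: "(\<integral>\<^sup>+y. ennreal (jumpP G x y) \<partial>count_space UNIV) = 1"
proof -
  have "(\<integral>\<^sup>+y. ennreal (jumpP G x y) \<partial>count_space UNIV) 
     = (\<integral>\<^sup>+y. ennreal (jumpP G x y) * ennreal 1 \<partial>count_space UNIV)" by simp
  also have "\<dots> = ennreal (infsum (\<lambda>y. G x y * 1) (-{x}) / gam G x)"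
    by (rule kernel_sum) (use G_summ in auto)
  also have "\<dots> = 1" using gam_pos[of x] by (simp add: gam_def)
  finally show ?thesis .
qed

end


lemma unif01_prob: "prob_space unif01" unfolding unif01_def by (intro prob_space_uniform_measure) auto
lemma sets_unif01[measurable_cong]: "sets unif01 = sets borel" unfolding unif01_def by simp
lemma space_unif01[simp]: "space unif01 = UNIV" unfolding unif01_def by simp
lemma M_prob: "prob_space (unif01 \<Otimes>\<^sub>M unif01)" by (intro prob_space_pair unif01_prob)
lemma Omega_prob: "prob_space Omega" unfolding Omega_def using prob_space.prob_space_stream_space[OF M_prob] .
lemma space_Omega[simp]: "space Omega = UNIV" unfolding Omega_def by (simp add: space_stream_space space_pair_measure)

lemma emeasure_unif01: "A \<in> sets borel \<Longrightarrow> emeasure unif01 A = emeasure lborel ({0<..<1} \<inter> A)"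
  unfolding unif01_def by (subst emeasure_uniform_measure) (auto simp: Int_commute divide_ennreal_def)

locale chain = gctx G for G :: "'a::countable \<Rightarrow> 'a \<Rightarrow> real" +
  assumes inf: "infinite (UNIV :: 'a set)"
begin

lemma enum_bij: "bij (enum_state :: nat \<Rightarrow> 'a)"
  unfolding enum_state_def using bij_betw_from_nat_into[OF _ inf] by simp

definition cs :: "'a \<Rightarrow> nat \<Rightarrow> real" where "cs x k = (\<Sum>j\<le>k. jumpP G x (enum_state j))"

lemma P_summable: "jumpP G x summable_on UNIV"
proof -
  have "(\<lambda>y. jumpP G x y) summable_on -{x}"
    using summable_on_cdiv[OF G_summ[of x], of "gam G x"]
    by (rule summable_on_cong[THEN iffD1, rotated]) (auto simp: jumpP_def)
  then have "(\<lambda>y. jumpP G x y) summable_on (-{x} \<union> {x})"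
    by (intro summable_on_Un_disjoint) auto
  then show ?thesis by (simp add: Un_commute)
qed

lemma P_infsum: "infsum (jumpP G x) UNIV = 1"
proof -
  have "ennreal (infsum (jumpP G x) UNIV) = (\<integral>\<^sup>+y. ennreal (jumpP G x y) \<partial>count_space UNIV)"
    by (rule nn_count_infsum[symmetric]) (auto simp: P_nonneg P_summable)
  then show ?thesis using kernel_one[of x]
    by (metis ennreal_1 ennreal_inj infsum_nonneg P_nonneg zero_le_one)
qed

lemma P_sums: "(\<lambda>j. jumpP G x (enum_state j)) sums 1"
proof -
  have "(jumpP G x has_sum 1) UNIV" using P_summable P_infsum by (metis has_sum_infsum)
  then have "((\<lambda>j. jumpP G x (enum_state j)) has_sum 1) UNIV"
    using has_sum_reindex_bij_betw[of enum_state UNIV UNIV "jumpP G x" 1] enum_bij by auto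
  then show ?thesis by (rule has_sum_imp_sums)
qed

lemma cs_mono: "j \<le> k \<Longrightarrow> cs x j \<le> cs x k"
  unfolding cs_def by (intro sum_mono2) (auto simp: P_nonneg)

lemma cs_nonneg: "0 \<le> cs x k" unfolding cs_def by (intro sum_nonneg) (auto simp: P_nonneg)

lemma cs_le1: "cs x k \<le> 1"
proof -
  have "cs x k = (\<Sum>j<Suc k. jumpP G x (enum_state j))" unfolding cs_def
    by (simp add: lessThan_Suc_atMost)
  also have "\<dots> \<le> 1" using sum_le_suminf[OF sums_summable[OF P_sums], of "{..<Suc k}"] P_nonneg
    sums_unique[OF P_sums] by auto
  finally show ?thesis .
qed

lemma cs_exceeds: "u < 1 \<Longrightarrow> \<exists>k. u < cs x k"
proof -
  assume u: "u < 1"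
  have "(\<lambda>n. \<Sum>j<n. jumpP G x (enum_state j)) \<longlonglongrightarrow> 1" using P_sums by (simp add: sums_def)
  from order_tendstoD(1)[OF this u] obtain n where "u < (\<Sum>j<n. jumpP G x (enum_state j))"
    by (auto simp: eventually_sequentially)
  moreover have "(\<Sum>j<n. jumpP G x (enum_state j)) \<le> cs x n"
    unfolding cs_def by (intro sum_mono2) (auto simp: P_nonneg)
  ultimately show ?thesis by (meson less_le_trans)
qed

lemma P_cs: "jumpP G x (enum_state m) = cs x m - (if m = 0 then 0 else cs x (m - 1))"
  by (cases m) (auto simp: cs_def)

lemma next_state_cs: "next_state G x u = enum_state (LEAST k. u < cs x k)"
  unfolding next_state_def cs_def ..

lemma Least_cs_iff:
  assumes u: "u < 1"
  shows "(LEAST k. u < cs x k) = m \<longleftrightarrow> u < cs x m \<and> (m = 0 \<or> cs x (m - 1) \<le> u)"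
proof
  obtain k where k: "u < cs x k" using cs_exceeds[OF u] by blast
  assume L: "(LEAST k. u < cs x k) = m"
  have 1: "u < cs x m" using LeastI[of "\<lambda>k. u < cs x k", OF k] L by simp
  have "m = 0 \<or> cs x (m - 1) \<le> u"
  proof (cases m)
    case (Suc n)
    have "\<not> u < cs x n" using not_less_Least[of n "\<lambda>k. u < cs x k"] L Suc by auto
    then show ?thesis using Suc by auto
  qed auto
  with 1 show "u < cs x m \<and> (m = 0 \<or> cs x (m - 1) \<le> u)" by blast
next
  assume A: "u < cs x m \<and> (m = 0 \<or> cs x (m - 1) \<le> u)"
  show "(LEAST k. u < cs x k) = m"
  proof (rule Least_equality)
    show "u < cs x m" using A by blast
    fix y assume y: "u < cs x y"
    show "m \<le> y"
    proof (rule ccontr)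
      assume "\<not> m \<le> y"
      then have "y \<le> m - 1" "m \<noteq> 0" by auto
      have "cs x y \<le> cs x (m - 1)" using \<open>y \<le> m - 1\<close> by (rule cs_mono)
      then show False using A y \<open>m \<noteq> 0\<close> by auto
    qed
  qed
qed

lemma next_state_meas[measurable]: "next_state G x \<in> borel \<rightarrow>\<^sub>M count_space UNIV"
proof -
  have "(\<lambda>u. LEAST k. u < cs x k) \<in> borel \<rightarrow>\<^sub>M count_space UNIV" by measurable
  then have "(\<lambda>u. enum_state (LEAST k. u < cs x k)) \<in> borel \<rightarrow>\<^sub>M count_space UNIV"
    by (rule measurable_compose) (rule measurable_count_space)
  then show ?thesis by (simp add: next_state_cs[abs_def])
qed

lemma next_state_dist: "emeasure unif01 {u. next_state G x u = z} = ennreal (jumpP G x z)"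
proof -
  obtain m where z: "z = enum_state m" using enum_bij by (metis bij_pointE)
  define lo where "lo = (if m = 0 then 0 else cs x (m - 1))"
  define hi where "hi = cs x m"
  have lohi: "0 \<le> lo" "lo \<le> hi" "hi \<le> 1"
    using cs_nonneg cs_mono cs_le1 by (auto simp: lo_def hi_def)
  have meas: "{u. next_state G x u = z} \<in> sets borel" by measurable
  have eq: "{0<..<1} \<inter> {u. next_state G x u = z} = {0<..<1} \<inter> {u. lo \<le> u \<and> u < hi}"
  proof -
    have "\<And>u. 0 < u \<Longrightarrow> u < 1 \<Longrightarrow> next_state G x u = z \<longleftrightarrow> lo \<le> u \<and> u < hi"
    proof -
      fix u :: real assume u0: "0 < u" and u: "u < 1"
      have "next_state G x u = z \<longleftrightarrow> (LEAST k. u < cs x k) = m"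
        unfolding next_state_cs z using enum_bij by (simp add: bij_def inj_eq)
      also have "\<dots> \<longleftrightarrow> lo \<le> u \<and> u < hi" using Least_cs_iff[OF u, of x m] u0
        by (auto simp: lo_def hi_def)
      finally show "next_state G x u = z \<longleftrightarrow> lo \<le> u \<and> u < hi" .
    qed
    then show ?thesis by (auto simp del: greaterThanLessThan_iff simp: greaterThanLessThan_iff[symmetric]) (auto)
  qed
  have sub1: "{lo<..<hi} \<subseteq> {0<..<1} \<inter> {u. lo \<le> u \<and> u < hi}" using lohi by auto
  have sub2: "{0<..<1} \<inter> {u. lo \<le> u \<and> u < hi} \<subseteq> {lo..hi}" by auto
  have "emeasure lborel ({0<..<1} \<inter> {u. lo \<le> u \<and> u < hi}) = ennreal (hi - lo)"
  proof (rule antisym)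
    show "emeasure lborel ({0<..<1} \<inter> {u. lo \<le> u \<and> u < hi}) \<le> ennreal (hi - lo)"
      using emeasure_mono[OF sub2, of lborel] lohi by simp
    show "ennreal (hi - lo) \<le> emeasure lborel ({0<..<1} \<inter> {u. lo \<le> u \<and> u < hi})"
      using emeasure_mono[OF sub1, of lborel] lohi by simp
  qed
  moreover have "jumpP G x z = hi - lo" unfolding z P_cs hi_def lo_def by simp
  ultimately show ?thesis using emeasure_unif01[OF meas] eq by simp
qed

end


context chain begin

definition step :: "'a \<Rightarrow> (real \<times> real) stream \<Rightarrow> 'a" where
  "step x \<omega> = next_state G x (fst (shd \<omega>))"

lemma next_state_meas_u[measurable]: "next_state G x \<in> unif01 \<rightarrow>\<^sub>M count_space UNIV"
  using next_state_meas by (simp add: measurable_cong_sets[OF sets_unif01 refl])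

lemma step_meas[measurable]: "step x \<in> Omega \<rightarrow>\<^sub>M count_space UNIV"
  unfolding Omega_def step_def[abs_def] by measurable

lemma stl_meas[measurable]: "stl \<in> Omega \<rightarrow>\<^sub>M Omega"
  unfolding Omega_def by (rule measurable_stl)

lemma meas_shift:
  assumes "\<And>y. F y \<in> borel_measurable Omega"
  shows "(\<lambda>\<omega>. F (step x \<omega>) (stl \<omega>)) \<in> borel_measurable Omega"
proof (rule measurable_compose_countable[where f="\<lambda>y \<omega>. F y (stl \<omega>)"])
  fix y show "(\<lambda>\<omega>. F y (stl \<omega>)) \<in> borel_measurable Omega"
    using measurable_compose[OF stl_meas assms[of y]] by simp
qed (rule step_meas)

lemma meas_shift_c:
  assumes "\<And>y. F y \<in> Omega \<rightarrow>\<^sub>M count_space UNIV"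
  shows "(\<lambda>\<omega>. F (step x \<omega>) (stl \<omega>)) \<in> Omega \<rightarrow>\<^sub>M count_space UNIV"
proof (rule measurable_compose_countable[where f="\<lambda>y \<omega>. F y (stl \<omega>)"])
  fix y show "(\<lambda>\<omega>. F y (stl \<omega>)) \<in> Omega \<rightarrow>\<^sub>M count_space UNIV"
    using measurable_compose[OF stl_meas assms[of y]] by simp
qed (rule step_meas)

lemma jc_Suc: "jump_chain G x \<omega> (Suc n) = jump_chain G (step x \<omega>) (stl \<omega>) n"
proof (induction n)
  case 0 then show ?case by (simp add: step_def)
next
  case (Suc n) then show ?case by simp
qed

lemma jc_0[simp]: "jump_chain G x \<omega> 0 = x" by simp

lemma ht_Suc: "holding_time G x \<omega> (Suc n) = holding_time G (step x \<omega>) (stl \<omega>) n"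
  unfolding holding_time_def jc_Suc by simp

lemma ht_0: "holding_time G x \<omega> 0 = - ln (snd (shd \<omega>)) / gam G x"
  unfolding holding_time_def by simp

lemma FS1:
  assumes F: "\<And>y. F y \<in> borel_measurable Omega"
  shows "(\<integral>\<^sup>+\<omega>. F (step x \<omega>) (stl \<omega>) \<partial>Omega)
       = (\<integral>\<^sup>+y. ennreal (jumpP G x y) * (\<integral>\<^sup>+\<omega>. F y \<omega> \<partial>Omega) \<partial>count_space UNIV)"
proof -
  interpret M: prob_space "unif01 \<Otimes>\<^sub>M unif01" by (rule M_prob)
  interpret U: prob_space unif01 by (rule unif01_prob)
  interpret PS: pair_prob_space unif01 unif01 ..
  define g where "g y = (\<integral>\<^sup>+\<omega>. F y \<omega> \<partial>Omega)" for y
  have gm: "(\<lambda>u. g (next_state G x u)) \<in> borel_measurable unif01"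
    by (rule measurable_compose[OF next_state_meas_u]) simp
  have gm2: "(\<lambda>p. g (next_state G x (fst p))) \<in> borel_measurable (unif01 \<Otimes>\<^sub>M unif01)"
    by (rule measurable_compose[OF measurable_fst gm])
  have "(\<integral>\<^sup>+\<omega>. F (step x \<omega>) (stl \<omega>) \<partial>Omega)
      = (\<integral>\<^sup>+p. (\<integral>\<^sup>+X. F (step x (p ## X)) (stl (p ## X)) \<partial>Omega) \<partial>(unif01 \<Otimes>\<^sub>M unif01))"
    using M.nn_integral_stream_space[OF meas_shift[OF F, where x=x, unfolded Omega_def]]
    unfolding Omega_def .
  also have "\<dots> = (\<integral>\<^sup>+p. g (next_state G x (fst p)) \<partial>(unif01 \<Otimes>\<^sub>M unif01))"
    by (simp add: step_def g_def)
  also have "\<dots> = (\<integral>\<^sup>+u. (\<integral>\<^sup>+v. g (next_state G x (fst (u, v))) \<partial>unif01) \<partial>unif01)"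
    by (rule U.nn_integral_fst[symmetric, OF gm2])
  also have "\<dots> = (\<integral>\<^sup>+u. g (next_state G x u) \<partial>unif01)"
    using U.emeasure_space_1 by simp
  also have "\<dots> = (\<integral>\<^sup>+u. (\<integral>\<^sup>+y. g y * indicator {u. next_state G x u = y} u \<partial>count_space UNIV) \<partial>unif01)"
  proof (intro nn_integral_cong)
    fix u
    have "(\<integral>\<^sup>+y. g y * indicator {u. next_state G x u = y} u \<partial>count_space UNIV)
        = (\<integral>\<^sup>+y. g y * indicator {next_state G x u} y \<partial>count_space UNIV)"
      by (intro nn_integral_cong) (auto split: split_indicator)
    also have "\<dots> = g (next_state G x u)" by simp
    finally show "g (next_state G x u) = (\<integral>\<^sup>+y. g y * indicator {u. next_state G x u = y} u \<partial>count_space UNIV)" ..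
  qed
  also have "\<dots> = (\<integral>\<^sup>+y. (\<integral>\<^sup>+u. g y * indicator {u. next_state G x u = y} u \<partial>unif01) \<partial>count_space UNIV)"
    by (rule nn_integral_count_space_nn_integral) auto
  also have "\<dots> = (\<integral>\<^sup>+y. g y * emeasure unif01 {u. next_state G x u = y} \<partial>count_space UNIV)"
    by (intro nn_integral_cong nn_integral_cmult_indicator) measurable
  also have "\<dots> = (\<integral>\<^sup>+y. ennreal (jumpP G x y) * g y \<partial>count_space UNIV)"
    by (simp add: next_state_dist mult.commute)
  finally show ?thesis by (simp add: g_def)
qed

lemma FS2: "(\<integral>\<^sup>+\<omega>. ennreal (holding_time G x \<omega> 0) \<partial>Omega) = ennreal (1 / gam G x)"
proof -
  interpret M: prob_space "unif01 \<Otimes>\<^sub>M unif01" by (rule M_prob)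
  interpret U: prob_space unif01 by (rule unif01_prob)
  interpret PS: pair_prob_space unif01 unif01 ..
  have gp: "0 < gam G x" by (rule gam_pos)
  have hm: "(\<lambda>v::real. ennreal (- ln v / gam G x)) \<in> borel_measurable unif01"
    by (simp add: measurable_cong_sets[OF sets_unif01 refl])
  have "(\<integral>\<^sup>+\<omega>. ennreal (holding_time G x \<omega> 0) \<partial>Omega)
     = (\<integral>\<^sup>+\<omega>. ennreal (- ln (snd (shd \<omega>)) / gam G x) \<partial>Omega)"
    by (simp add: ht_0)
  also have "\<dots> = (\<integral>\<^sup>+p. (\<integral>\<^sup>+X. ennreal (- ln (snd (shd (p ## X))) / gam G x) \<partial>Omega) \<partial>(unif01 \<Otimes>\<^sub>M unif01))"
    unfolding Omega_def by (rule M.nn_integral_stream_space) measurable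
  also have "\<dots> = (\<integral>\<^sup>+p. ennreal (- ln (snd p) / gam G x) \<partial>(unif01 \<Otimes>\<^sub>M unif01))"
    using prob_space.emeasure_space_1[OF Omega_prob] by simp
  also have "\<dots> = (\<integral>\<^sup>+v. (\<integral>\<^sup>+u. ennreal (- ln (snd (u, v)) / gam G x) \<partial>unif01) \<partial>unif01)"
    by (rule PS.nn_integral_snd[symmetric]) measurable
  also have "\<dots> = (\<integral>\<^sup>+v. ennreal (- ln v / gam G x) \<partial>unif01)"
    using U.emeasure_space_1 by simp
  also have "\<dots> = (\<integral>\<^sup>+v. ennreal (- ln v / gam G x) * indicator {0<..<1} v \<partial>lborel)"
    unfolding unif01_def by (subst nn_integral_uniform_measure) (auto simp: divide_ennreal_def)
  also have "\<dots> = (\<integral>\<^sup>+v. ennreal (1 / gam G x) * (ennreal (- ln v) * indicator {0<..<1} v) \<partial>lborel)"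
  proof (intro nn_integral_cong)
    fix v :: real
    show "ennreal (- ln v / gam G x) * indicator {0<..<1} v = ennreal (1 / gam G x) * (ennreal (- ln v) * indicator {0<..<1} v)"
    proof (cases "v \<in> {0<..<1}")
      case True
      then have "0 \<le> - ln v" by auto
      then show ?thesis using True gp by (simp add: ennreal_mult'[symmetric] mult.commute)
    qed simp
  qed
  also have "\<dots> = ennreal (1 / gam G x) * (\<integral>\<^sup>+v. ennreal (- ln v) * indicator {0<..<1} v \<partial>lborel)"
    by (rule nn_integral_cmult) measurable
  also have "\<dots> = ennreal (1 / gam G x)" using lnint by simp
  finally show ?thesis .
qed

end


context chain begin

primrec SS :: "'a set \<Rightarrow> nat \<Rightarrow> 'a \<Rightarrow> (real \<times> real) stream \<Rightarrow> 'a" where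
  "SS S 0 y \<omega> = y"
| "SS S (Suc n) y \<omega> = (if y \<in> S then y else SS S n (step y \<omega>) (stl \<omega>))"

primrec TT :: "'a set \<Rightarrow> nat \<Rightarrow> 'a \<Rightarrow> (real \<times> real) stream \<Rightarrow> ennreal" where
  "TT S 0 y \<omega> = 0"
| "TT S (Suc n) y \<omega> = (if y \<in> S then 0 else ennreal (holding_time G y \<omega> 0) + TT S n (step y \<omega>) (stl \<omega>))"

definition hit :: "'a set \<Rightarrow> 'a \<Rightarrow> (real \<times> real) stream \<Rightarrow> bool" where
  "hit A y \<omega> \<longleftrightarrow> (\<exists>n. jump_chain G y \<omega> n \<in> A)"

definition tau :: "'a set \<Rightarrow> 'a \<Rightarrow> (real \<times> real) stream \<Rightarrow> ennreal" where
  "tau A y \<omega> = (if hit A y \<omega> then (SUP n. TT A n y \<omega>) else \<infinity>)"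

lemma ht0_meas[measurable]: "(\<lambda>\<omega>. holding_time G y \<omega> 0) \<in> borel_measurable Omega"
  unfolding ht_0 Omega_def by measurable

lemma SS_meas[measurable]: "SS S n y \<in> Omega \<rightarrow>\<^sub>M count_space UNIV"
proof (induction n arbitrary: y)
  case 0 then show ?case by simp
next
  case (Suc n)
  have "(\<lambda>\<omega>. SS S n (step y \<omega>) (stl \<omega>)) \<in> Omega \<rightarrow>\<^sub>M count_space UNIV"
    by (rule meas_shift_c) (rule Suc)
  then show ?case by (cases "y \<in> S") (simp_all add: fun_eq_iff)
qed

lemma TT_meas[measurable]: "TT S n y \<in> borel_measurable Omega"
proof (induction n arbitrary: y)
  case 0 then show ?case by simp
next
  case (Suc n)
  have "(\<lambda>\<omega>. TT S n (step y \<omega>) (stl \<omega>)) \<in> borel_measurable Omega"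
    by (rule meas_shift) (rule Suc)
  then show ?case by (cases "y \<in> S") (simp_all add: fun_eq_iff)
qed

lemma jc_meas[measurable]: "(\<lambda>\<omega>. jump_chain G y \<omega> n) \<in> Omega \<rightarrow>\<^sub>M count_space UNIV"
proof (induction n arbitrary: y)
  case 0 then show ?case by simp
next
  case (Suc n)
  have "(\<lambda>\<omega>. jump_chain G (step y \<omega>) (stl \<omega>) n) \<in> Omega \<rightarrow>\<^sub>M count_space UNIV"
    by (rule meas_shift_c) (rule Suc)
  then show ?case by (simp only: jc_Suc)
qed

lemma hit_meas[measurable]: "Measurable.pred Omega (hit A y)"
  unfolding hit_def[abs_def] by measurable

lemma tau_meas[measurable]: "tau A y \<in> borel_measurable Omega"
  unfolding tau_def[abs_def] by measurable

lemma hit_step: "hit A y \<omega> \<longleftrightarrow> y \<in> A \<or> hit A (step y \<omega>) (stl \<omega>)"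
proof
  assume "hit A y \<omega>"
  then obtain n where n: "jump_chain G y \<omega> n \<in> A" unfolding hit_def by blast
  show "y \<in> A \<or> hit A (step y \<omega>) (stl \<omega>)"
  proof (cases n)
    case 0 then show ?thesis using n by simp
  next
    case (Suc m)
    then have "jump_chain G (step y \<omega>) (stl \<omega>) m \<in> A" using n by (simp only: jc_Suc)
    then show ?thesis unfolding hit_def by blast
  qed
next
  assume "y \<in> A \<or> hit A (step y \<omega>) (stl \<omega>)"
  then show "hit A y \<omega>"
  proof
    assume "y \<in> A" then have "jump_chain G y \<omega> 0 \<in> A" by simp
    then show ?thesis unfolding hit_def by blast
  next
    assume "hit A (step y \<omega>) (stl \<omega>)"
    then obtain n where "jump_chain G (step y \<omega>) (stl \<omega>) n \<in> A" unfolding hit_def by blast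
    then have "jump_chain G y \<omega> (Suc n) \<in> A" by (simp only: jc_Suc)
    then show ?thesis unfolding hit_def by blast
  qed
qed

lemma TT_mono_Suc: "TT S n y \<omega> \<le> TT S (Suc n) y \<omega>"
proof (induction n arbitrary: y \<omega>)
  case 0 then show ?case by simp
next
  case (Suc n) then show ?case by (simp add: add_left_mono)
qed

lemma TT_incseq: "incseq (\<lambda>n. TT S n y \<omega>)"
  by (rule incseq_SucI) (rule TT_mono_Suc)

lemma tau_in: "y \<in> A \<Longrightarrow> tau A y \<omega> = 0"
proof -
  assume y: "y \<in> A"
  have "\<And>n. TT A n y \<omega> = 0" subgoal for n using y by (cases n) simp_all done
  moreover have "hit A y \<omega>" using hit_step[of A y \<omega>] y by blast
  ultimately show ?thesis by (simp add: tau_def)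
qed

lemma SUP_Suc_inc:
  fixes f :: "nat \<Rightarrow> ennreal"
  assumes "incseq f" shows "(SUP n. f (Suc n)) = (SUP n. f n)"
proof (rule antisym)
  show "(SUP n. f (Suc n)) \<le> (SUP n. f n)"
    by (rule SUP_least) (rule SUP_upper, simp)
  show "(SUP n. f n) \<le> (SUP n. f (Suc n))"
  proof (rule SUP_least)
    fix n
    have "f n \<le> f (Suc n)" using assms by (simp add: incseq_Suc_iff)
    also have "\<dots> \<le> (SUP n. f (Suc n))" by (rule SUP_upper) simp
    finally show "f n \<le> (SUP n. f (Suc n))" .
  qed
qed

lemma tau_step: "y \<notin> A \<Longrightarrow> tau A y \<omega> = ennreal (holding_time G y \<omega> 0) + tau A (step y \<omega>) (stl \<omega>)"
proof -
  assume y: "y \<notin> A"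
  show ?thesis
  proof (cases "hit A y \<omega>")
    case False
    then show ?thesis using hit_step[of A y \<omega>] y by (simp add: tau_def)
  next
    case True
    then have h: "hit A (step y \<omega>) (stl \<omega>)" using hit_step[of A y \<omega>] y by simp
    have "(SUP n. TT A n y \<omega>) = (SUP n. TT A (Suc n) y \<omega>)"
      using SUP_Suc_inc[OF TT_incseq] by simp
    also have "\<dots> = (SUP n. ennreal (holding_time G y \<omega> 0) + TT A n (step y \<omega>) (stl \<omega>))"
      using y by simp
    also have "\<dots> = ennreal (holding_time G y \<omega> 0) + (SUP n. TT A n (step y \<omega>) (stl \<omega>))"
      by (rule ennreal_SUP_add_right[symmetric]) simp
    finally show ?thesis using True h by (simp add: tau_def)
  qed
qed

end


context chain begin

definition good :: "(real \<times> real) stream \<Rightarrow> bool" where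
  "good \<omega> \<longleftrightarrow> (\<forall>n. snd (\<omega> !! n) \<in> {0<..<1})"

lemma AE_good: "AE \<omega> in Omega. good \<omega>"
proof -
  interpret M: prob_space "unif01 \<Otimes>\<^sub>M unif01" by (rule M_prob)
  interpret U: prob_space unif01 by (rule unif01_prob)
  interpret PS: pair_prob_space unif01 unif01 ..
  have u: "AE v in unif01. v \<in> {0<..<1}"
    unfolding unif01_def by (rule AE_uniform_measureI) auto
  have "AE p in unif01 \<Otimes>\<^sub>M unif01. snd p \<in> {0<..<1}"
  proof (rule PS.AE_pair_measure)
    show "{x \<in> space (unif01 \<Otimes>\<^sub>M unif01). snd x \<in> {0<..<1}} \<in> sets (unif01 \<Otimes>\<^sub>M unif01)"
      by measurable
    show "AE x in unif01. AE y in unif01. snd (x, y) \<in> {0<..<1}" using u by simp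
  qed
  then have "AE \<omega> in stream_space (unif01 \<Otimes>\<^sub>M unif01). stream_all (\<lambda>p. snd p \<in> {0<..<1}) \<omega>"
    by (intro M.AE_stream_all) auto
  then show ?thesis unfolding Omega_def good_def stream_all_def by simp
qed

lemma ht_pos: "good \<omega> \<Longrightarrow> 0 < holding_time G y \<omega> n"
proof -
  assume g: "good \<omega>"
  then have "ln (snd (\<omega> !! n)) < 0" unfolding good_def by (auto intro!: ln_less_zero)
  then show ?thesis unfolding holding_time_def using gam_pos
    by (simp add: divide_neg_pos)
qed

lemma all_le_Suc: "(\<forall>j\<le>Suc k. P j) \<longleftrightarrow> P 0 \<and> (\<forall>j\<le>k. P (Suc j))"
  apply (auto)
  subgoal for j by (cases j) auto
  done

lemma TT_sum: "TT A n y \<omega> = (\<Sum>k<n. if (\<forall>j\<le>k. jump_chain G y \<omega> j \<notin> A) then ennreal (holding_time G y \<omega> k) else 0)"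
proof (induction n arbitrary: y \<omega>)
  case 0 then show ?case by simp
next
  case (Suc n)
  show ?case
  proof (cases "y \<in> A")
    case True
    then show ?thesis by (auto intro!: sum.neutral)
  next
    case False
    have "(\<Sum>k<Suc n. if (\<forall>j\<le>k. jump_chain G y \<omega> j \<notin> A) then ennreal (holding_time G y \<omega> k) else 0)
      = (if (\<forall>j\<le>0. jump_chain G y \<omega> j \<notin> A) then ennreal (holding_time G y \<omega> 0) else 0) +
        (\<Sum>k<n. if (\<forall>j\<le>Suc k. jump_chain G y \<omega> j \<notin> A) then ennreal (holding_time G y \<omega> (Suc k)) else 0)"
      by (rule sum.lessThan_Suc_shift)
    also have "\<dots> = ennreal (holding_time G y \<omega> 0) +
        (\<Sum>k<n. if (\<forall>j\<le>k. jump_chain G (step y \<omega>) (stl \<omega>) j \<notin> A) then ennreal (holding_time G (step y \<omega>) (stl \<omega>) k) else 0)"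
      unfolding ht_Suc using False by (simp add: all_le_Suc jc_Suc del: jump_chain.simps)
    finally show ?thesis using False Suc[of "step y \<omega>" "stl \<omega>"] by simp
  qed
qed

lemma hitting_time_tau:
  assumes g: "good \<omega>"
  shows "hitting_time G A y \<omega> = tau A y \<omega>"
proof -
  define H where "H k = holding_time G y \<omega> k" for k
  define J where "J n = jump_time G y \<omega> n" for n
  have Hp: "0 < H k" for k unfolding H_def by (rule ht_pos[OF g])
  have JS: "J (Suc n) = J n + H n" for n by (simp add: J_def H_def jump_time_def)
  have J0: "J 0 = 0" by (simp add: J_def jump_time_def)
  have Jsm: "strict_mono J" using JS Hp by (intro strict_mono_Suc_iff[THEN iffD2]) auto
  have Jnn: "0 \<le> J n" for n using Jsm J0 by (metis le0 strict_mono_less_eq)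
  have uniq: "n = m" if "J n \<le> t" "t < J (Suc n)" "J m \<le> t" "t < J (Suc m)" for n m t
  proof (rule ccontr)
    assume "n \<noteq> m"
    then have "Suc n \<le> m \<or> Suc m \<le> n" by auto
    then show False using that strict_mono_less_eq[OF Jsm] by (meson leD order_le_less_trans)
  qed
  have cS: "ctmc G y \<omega> t = Some (jump_chain G y \<omega> n)" if "J n \<le> t" "t < J (Suc n)" for n t
  proof -
    have "(THE n. J n \<le> t \<and> t < J (Suc n)) = n"
      using that uniq by (intro the_equality) auto
    then show ?thesis using that unfolding ctmc_def J_def by auto
  qed
  have cI: "\<exists>n. J n \<le> t \<and> t < J (Suc n) \<and> z = jump_chain G y \<omega> n" if "ctmc G y \<omega> t = Some z" for t z
  proof -
    from that have ex: "\<exists>n. J n \<le> t \<and> t < J (Suc n)"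
      unfolding ctmc_def J_def by (auto split: if_splits)
    then obtain n where n: "J n \<le> t" "t < J (Suc n)" by blast
    with cS[OF n] that show ?thesis by auto
  qed
  define T where "T = {t. 0 \<le> t \<and> (\<exists>z\<in>A. ctmc G y \<omega> t = Some z)}"
  have ht: "hitting_time G A y \<omega> = (INF t\<in>T. ennreal t)"
    by (simp add: hitting_time_def T_def)
  show ?thesis
  proof (cases "hit A y \<omega>")
    case False
    have "T = {}"
    proof -
      { fix t assume "t \<in> T"
        then obtain z where z: "z \<in> A" "ctmc G y \<omega> t = Some z" by (auto simp: T_def)
        from cI[OF z(2)] z(1) False have False by (auto simp: hit_def) }
      then show ?thesis by blast
    qed
    then show ?thesis using False by (simp add: ht tau_def)
  next
    case True
    define N where "N = (LEAST n. jump_chain G y \<omega> n \<in> A)"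
    have NA: "jump_chain G y \<omega> N \<in> A" using True unfolding hit_def N_def by (metis LeastI)
    have Nmin: "n < N \<Longrightarrow> jump_chain G y \<omega> n \<notin> A" for n unfolding N_def by (rule not_less_Least)
    have cond: "(\<forall>j\<le>k. jump_chain G y \<omega> j \<notin> A) \<longleftrightarrow> k < N" for k
      using Nmin NA by (metis le_less_trans linorder_not_le order_refl)
    have TTeq: "TT A n y \<omega> = (\<Sum>k\<in>{..<n} \<inter> {..<N}. ennreal (H k))" for n
      unfolding TT_sum cond H_def by (simp add: sum.inter_restrict)
    have "(SUP n. TT A n y \<omega>) = (\<Sum>k<N. ennreal (H k))"
    proof (rule antisym)
      show "(SUP n. TT A n y \<omega>) \<le> (\<Sum>k<N. ennreal (H k))"
        unfolding TTeq by (intro SUP_least sum_mono2) auto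
      have "(\<Sum>k<N. ennreal (H k)) = TT A N y \<omega>" unfolding TTeq by simp
      also have "\<dots> \<le> (SUP n. TT A n y \<omega>)" by (rule SUP_upper) simp
      finally show "(\<Sum>k<N. ennreal (H k)) \<le> (SUP n. TT A n y \<omega>)" .
    qed
    also have "\<dots> = ennreal (J N)" using Hp
      by (simp add: J_def jump_time_def H_def less_imp_le)
    finally have tv: "tau A y \<omega> = ennreal (J N)" using True by (simp add: tau_def)
    have JNT: "J N \<in> T" unfolding T_def using Jnn cS[of N "J N"] JS Hp NA
      by (auto intro!: bexI[of _ "jump_chain G y \<omega> N"])
    have lb: "J N \<le> t" if "t \<in> T" for t
    proof -
      from that obtain z where z: "z \<in> A" "ctmc G y \<omega> t = Some z" by (auto simp: T_def)
      from cI[OF z(2)] obtain n where n: "J n \<le> t" "z = jump_chain G y \<omega> n" by blast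
      then have "N \<le> n" using Nmin z(1) by (meson not_less)
      then show ?thesis using n strict_mono_less_eq[OF Jsm] by (meson order_trans)
    qed
    have "(INF t\<in>T. ennreal t) = ennreal (J N)"
    proof (rule antisym)
      show "(INF t\<in>T. ennreal t) \<le> ennreal (J N)" using JNT by (rule INF_lower)
      show "ennreal (J N) \<le> (INF t\<in>T. ennreal t)" using lb by (auto intro!: INF_greatest ennreal_leI)
    qed
    then show ?thesis using ht tv by simp
  qed
qed

lemma exp_tau: "exp_hitting_time G A y = (\<integral>\<^sup>+\<omega>. tau A y \<omega> \<partial>Omega)"
  unfolding exp_hitting_time_def
  by (rule nn_integral_cong_AE) (use AE_good in \<open>auto elim!: eventually_mono simp: hitting_time_tau\<close>)

end


context chain begin

lemma emeasure_Omega_UNIV[simp]: "emeasure Omega UNIV = 1"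
  using prob_space.emeasure_space_1[OF Omega_prob] by simp

lemma E_const[simp]: "(\<integral>\<^sup>+\<omega>. c \<partial>Omega) = c"
  by simp

lemma SS_in: "y \<in> S \<Longrightarrow> SS S n y \<omega> = y"
  by (cases n) simp_all

lemma E_SS_in: "y \<in> S \<Longrightarrow> (\<integral>\<^sup>+\<omega>. \<phi> (SS S n y \<omega>) \<partial>Omega) = \<phi> y"
  by (simp add: SS_in)

lemma phi_SS_meas[measurable]: "(\<lambda>\<omega>. (\<phi> :: 'a \<Rightarrow> ennreal) (SS S n z \<omega>)) \<in> borel_measurable Omega"
  by (rule measurable_compose[OF SS_meas]) simp

lemma E_SS_step: "y \<notin> S \<Longrightarrow> (\<integral>\<^sup>+\<omega>. \<phi> (SS S (Suc n) y \<omega>) \<partial>Omega)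
   = (\<integral>\<^sup>+z. ennreal (jumpP G y z) * (\<integral>\<^sup>+\<omega>. \<phi> (SS S n z \<omega>) \<partial>Omega) \<partial>count_space UNIV)"
  using FS1[of "\<lambda>z \<omega>. \<phi> (SS S n z \<omega>)" y] by simp

lemma E_TT_step: "y \<notin> S \<Longrightarrow> (\<integral>\<^sup>+\<omega>. TT S (Suc n) y \<omega> \<partial>Omega)
   = ennreal (1 / gam G y) + (\<integral>\<^sup>+z. ennreal (jumpP G y z) * (\<integral>\<^sup>+\<omega>. TT S n z \<omega> \<partial>Omega) \<partial>count_space UNIV)"
proof -
  assume y: "y \<notin> S"
  have "(\<integral>\<^sup>+\<omega>. TT S (Suc n) y \<omega> \<partial>Omega)
     = (\<integral>\<^sup>+\<omega>. ennreal (holding_time G y \<omega> 0) + TT S n (step y \<omega>) (stl \<omega>) \<partial>Omega)"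
    using y by simp
  also have "\<dots> = (\<integral>\<^sup>+\<omega>. ennreal (holding_time G y \<omega> 0) \<partial>Omega) + (\<integral>\<^sup>+\<omega>. TT S n (step y \<omega>) (stl \<omega>) \<partial>Omega)"
    by (rule nn_integral_add) (auto intro!: meas_shift)
  finally show ?thesis by (simp add: FS2 FS1)
qed

lemma E_tau_step: "y \<notin> A \<Longrightarrow> (\<integral>\<^sup>+\<omega>. tau A y \<omega> \<partial>Omega)
   = ennreal (1 / gam G y) + (\<integral>\<^sup>+z. ennreal (jumpP G y z) * (\<integral>\<^sup>+\<omega>. tau A z \<omega> \<partial>Omega) \<partial>count_space UNIV)"
proof -
  assume y: "y \<notin> A"
  have "(\<integral>\<^sup>+\<omega>. tau A y \<omega> \<partial>Omega)
     = (\<integral>\<^sup>+\<omega>. ennreal (holding_time G y \<omega> 0) + tau A (step y \<omega>) (stl \<omega>) \<partial>Omega)"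
    using y by (simp add: tau_step)
  also have "\<dots> = (\<integral>\<^sup>+\<omega>. ennreal (holding_time G y \<omega> 0) \<partial>Omega) + (\<integral>\<^sup>+\<omega>. tau A (step y \<omega>) (stl \<omega>) \<partial>Omega)"
    by (rule nn_integral_add) (auto intro!: meas_shift)
  finally show ?thesis by (simp add: FS2 FS1)
qed

definition PH :: "'a set \<Rightarrow> 'a \<Rightarrow> ennreal" where
  "PH A y = (\<integral>\<^sup>+\<omega>. indicator {\<omega>. hit A y \<omega>} \<omega> \<partial>Omega)"

lemma hit_set_meas[measurable]: "{\<omega>. hit A y \<omega>} \<in> sets Omega"
  using hit_meas[of A y] by (simp add: pred_def)

lemma PH_emeasure: "PH A y = emeasure Omega {\<omega>. hit A y \<omega>}"
  unfolding PH_def by simp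

lemma PH_le1: "PH A y \<le> 1"
  unfolding PH_emeasure using prob_space.emeasure_le_1[OF Omega_prob] by simp

lemma PH_in: "y \<in> A \<Longrightarrow> PH A y = 1"
proof -
  assume y: "y \<in> A"
  then have "\<And>\<omega>. hit A y \<omega>" using hit_step by blast
  then have "{\<omega>. hit A y \<omega>} = UNIV" by blast
  then show ?thesis unfolding PH_emeasure by simp
qed

lemma PH_step: "y \<notin> A \<Longrightarrow> PH A y = (\<integral>\<^sup>+z. ennreal (jumpP G y z) * PH A z \<partial>count_space UNIV)"
proof -
  assume y: "y \<notin> A"
  have "PH A y = (\<integral>\<^sup>+\<omega>. indicator {\<omega>. hit A (step y \<omega>) (stl \<omega>)} \<omega> \<partial>Omega)"
    unfolding PH_def using y hit_step[of A y] by (intro nn_integral_cong) (auto split: split_indicator)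
  also have "\<dots> = (\<integral>\<^sup>+\<omega>. (\<lambda>z \<omega>. indicator {\<omega>. hit A z \<omega>} \<omega>) (step y \<omega>) (stl \<omega>) \<partial>Omega)"
    by (intro nn_integral_cong) (auto split: split_indicator)
  also have "\<dots> = (\<integral>\<^sup>+z. ennreal (jumpP G y z) * PH A z \<partial>count_space UNIV)"
    by (subst FS1) (auto simp: PH_def)
  finally show ?thesis .
qed

lemma rec_step:
  assumes rec: "jump_recurrent G"
  shows "(\<integral>\<^sup>+z. ennreal (jumpP G x z) * PH {x} z \<partial>count_space UNIV) = 1"
proof -
  have eq: "{\<omega>. \<exists>n>0. jump_chain G x \<omega> n = x} = {\<omega>. hit {x} (step x \<omega>) (stl \<omega>)}"
  proof (auto simp: hit_def)
    fix \<omega> n assume "0 < n" "jump_chain G x \<omega> n = x"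
    then show "\<exists>m. jump_chain G (step x \<omega>) (stl \<omega>) m = x"
      by (metis jc_Suc gr0_implies_Suc)
  next
    fix \<omega> m assume "jump_chain G (step x \<omega>) (stl \<omega>) m = x"
    then show "\<exists>n>0. jump_chain G x \<omega> n = x" by (metis jc_Suc zero_less_Suc)
  qed
  have "emeasure Omega {\<omega>. \<exists>n>0. jump_chain G x \<omega> n = x} = 1"
    using rec by (simp add: jump_recurrent_def)
  then have "1 = emeasure Omega {\<omega>. hit {x} (step x \<omega>) (stl \<omega>)}"
    unfolding eq by simp
  also have "\<dots> = (\<integral>\<^sup>+\<omega>. (\<lambda>z \<omega>. indicator {\<omega>. hit {x} z \<omega>} \<omega>) (step x \<omega>) (stl \<omega>) \<partial>Omega)"
  proof -
    have F: "(\<lambda>\<omega>. hit {x} (step x \<omega>) (stl \<omega>)) \<in> Omega \<rightarrow>\<^sub>M count_space UNIV"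
      by (rule measurable_compose_countable[where f="\<lambda>z \<omega>. hit {x} z (stl \<omega>)"])
         (auto intro: measurable_compose[OF stl_meas hit_meas] step_meas)
    have "(\<lambda>\<omega>. hit {x} (step x \<omega>) (stl \<omega>)) -` {True} \<inter> space Omega \<in> sets Omega"
      by (rule measurable_sets[OF F]) simp
    then have "{\<omega>. hit {x} (step x \<omega>) (stl \<omega>)} \<in> sets Omega"
      by (simp add: vimage_def)
    then have "emeasure Omega {\<omega>. hit {x} (step x \<omega>) (stl \<omega>)} = (\<integral>\<^sup>+\<omega>. indicator {\<omega>. hit {x} (step x \<omega>) (stl \<omega>)} \<omega> \<partial>Omega)"
      by (subst nn_integral_indicator) auto
    also have "\<dots> = (\<integral>\<^sup>+\<omega>. (\<lambda>z \<omega>. indicator {\<omega>. hit {x} z \<omega>} \<omega>) (step x \<omega>) (stl \<omega>) \<partial>Omega)"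
      by (intro nn_integral_cong) (auto split: split_indicator)
    finally show ?thesis .
  qed
  also have "\<dots> = (\<integral>\<^sup>+z. ennreal (jumpP G x z) * PH {x} z \<partial>count_space UNIV)"
    by (subst FS1) (auto simp: PH_def)
  finally show ?thesis ..
qed

lemma kernel_full:
  assumes s: "(\<integral>\<^sup>+v. ennreal (jumpP G u v) * \<phi> v \<partial>count_space UNIV) = 1"
    and le: "\<And>v. \<phi> v \<le> 1" and p: "0 < jumpP G u v"
  shows "\<phi> v = 1"
proof -
  have "(\<integral>\<^sup>+v. ennreal (jumpP G u v) * \<phi> v \<partial>count_space UNIV) + (\<integral>\<^sup>+v. ennreal (jumpP G u v) * (1 - \<phi> v) \<partial>count_space UNIV)
     = (\<integral>\<^sup>+v. ennreal (jumpP G u v) * \<phi> v + ennreal (jumpP G u v) * (1 - \<phi> v) \<partial>count_space UNIV)"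
    by (rule nn_integral_add[symmetric]) auto
  also have "\<dots> = (\<integral>\<^sup>+v. ennreal (jumpP G u v) \<partial>count_space UNIV)"
  proof (intro nn_integral_cong)
    fix v
    have "\<phi> v + (1 - \<phi> v) = 1" using le[of v] diff_add_cancel_ennreal[of "\<phi> v" 1] by (simp add: add.commute)
    then show "ennreal (jumpP G u v) * \<phi> v + ennreal (jumpP G u v) * (1 - \<phi> v) = ennreal (jumpP G u v)"
      by (metis distrib_left mult_1_right)
  qed
  also have "\<dots> = 1" by (rule kernel_one)
  finally have "1 + (\<integral>\<^sup>+v. ennreal (jumpP G u v) * (1 - \<phi> v) \<partial>count_space UNIV) = 1 + 0"
    using s by simp
  then have "(\<integral>\<^sup>+v. ennreal (jumpP G u v) * (1 - \<phi> v) \<partial>count_space UNIV) = 0"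
    using ennreal_add_left_cancel by fastforce
  then have "\<forall>v. ennreal (jumpP G u v) * (1 - \<phi> v) = 0"
    by (subst (asm) nn_integral_0_iff_AE) (auto simp: AE_count_space)
  moreover have "ennreal (jumpP G u v) \<noteq> 0" using p by simp
  ultimately have "1 - \<phi> v = 0" by auto
  then show ?thesis using le[of v] ennreal_minus_eq_0 by (metis antisym)
qed

lemma hit_as:
  assumes irr: "jump_irreducible G" and rec: "jump_recurrent G"
  shows "PH {y} x = 1"
proof -
  have "(\<lambda>u v. 0 < jumpP G u v)\<^sup>*\<^sup>* y x" using irr by (simp add: jump_irreducible_def)
  then show ?thesis
  proof (induction rule: rtranclp_induct)
    case base then show ?case by (simp add: PH_in)
  next
    case (step u v)
    have s: "(\<integral>\<^sup>+z. ennreal (jumpP G u z) * PH {y} z \<partial>count_space UNIV) = 1"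
    proof (cases "u = y")
      case True then show ?thesis using rec_step[OF rec, of y] by simp
    next
      case False then show ?thesis using PH_step[of u "{y}"] step.IH by simp
    qed
    show ?case by (rule kernel_full[OF s PH_le1 step.hyps(2)])
  qed
qed

lemma AE_hit:
  assumes irr: "jump_irreducible G" and rec: "jump_recurrent G" and A: "A \<noteq> {}"
  shows "AE \<omega> in Omega. hit A x \<omega>"
proof -
  interpret O: prob_space Omega by (rule Omega_prob)
  obtain y where y: "y \<in> A" using A by blast
  have "O.prob {\<omega>. hit {y} x \<omega>} = 1"
    using hit_as[OF irr rec, of y x] by (simp add: PH_emeasure O.emeasure_eq_measure)
  then have "AE \<omega> in Omega. \<omega> \<in> {\<omega>. hit {y} x \<omega>}" by (intro O.AE_prob_1) auto
  then show ?thesis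
    by (rule eventually_mono) (use y in \<open>auto simp: hit_def\<close>)
qed

lemma E_tau_SUP:
  assumes "AE \<omega> in Omega. hit A x \<omega>"
  shows "(\<integral>\<^sup>+\<omega>. tau A x \<omega> \<partial>Omega) = (SUP n. \<integral>\<^sup>+\<omega>. TT A n x \<omega> \<partial>Omega)"
proof -
  have "(\<integral>\<^sup>+\<omega>. tau A x \<omega> \<partial>Omega) = (\<integral>\<^sup>+\<omega>. (SUP n. TT A n x \<omega>) \<partial>Omega)"
    by (rule nn_integral_cong_AE) (use assms in \<open>auto elim!: eventually_mono simp: tau_def\<close>)
  also have "\<dots> = (SUP n. \<integral>\<^sup>+\<omega>. TT A n x \<omega> \<partial>Omega)"
    by (rule nn_integral_monotone_convergence_SUP) (auto intro!: incseq_SucI le_funI TT_mono_Suc)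
  finally show ?thesis .
qed

lemma compare:
  assumes V: "\<And>z. z \<notin> A \<Longrightarrow> ennreal (1 / gam G z)
      + (\<integral>\<^sup>+v. ennreal (jumpP G z v) * (if v \<in> A then 0 else V v) \<partial>count_space UNIV) \<le> V z"
  shows "(\<integral>\<^sup>+\<omega>. TT A n z \<omega> \<partial>Omega) \<le> (if z \<in> A then 0 else V z)"
proof (induction n arbitrary: z)
  case 0 then show ?case by simp
next
  case (Suc n)
  show ?case
  proof (cases "z \<in> A")
    case True then show ?thesis by simp
  next
    case False
    have "(\<integral>\<^sup>+\<omega>. TT A (Suc n) z \<omega> \<partial>Omega)
       = ennreal (1 / gam G z) + (\<integral>\<^sup>+v. ennreal (jumpP G z v) * (\<integral>\<^sup>+\<omega>. TT A n v \<omega> \<partial>Omega) \<partial>count_space UNIV)"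
      using False by (rule E_TT_step)
    also have "\<dots> \<le> ennreal (1 / gam G z) + (\<integral>\<^sup>+v. ennreal (jumpP G z v) * (if v \<in> A then 0 else V v) \<partial>count_space UNIV)"
      by (intro add_left_mono nn_integral_mono mult_left_mono Suc.IH) auto
    also have "\<dots> \<le> V z" using V[OF False] .
    finally show ?thesis using False by simp
  qed
qed

end


context chain begin

lemma Ksumm:
  assumes "\<And>v. 0 \<le> h v" "\<And>v. h v \<le> c"
  shows "(\<lambda>v. G x v * h v) summable_on -{x}"
proof (rule summable_on_comparison_test[where f="\<lambda>v. G x v * c"])
  show "(\<lambda>v. G x v * c) summable_on -{x}" by (rule summable_on_cmult_left[OF G_summ])
  fix v assume "v \<in> -{x}"
  then have "0 \<le> G x v" using G_nonneg by auto
  then show "G x v * h v \<le> G x v * c" "0 \<le> G x v * h v"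
    using assms by (auto intro: mult_left_mono)
qed

lemma K_one: "infsum (\<lambda>v. G x v * 1) (-{x}) = gam G x"
  by (simp add: gam_def)

lemma part1_ii_i:
  assumes ii: "\<forall>A. finite A \<and> A \<noteq> {} \<longrightarrow> (\<exists>C>0. \<forall>x. x \<notin> A \<longrightarrow> exp_hitting_time G A x \<le> ennreal C)"
  shows "\<exists>f b a \<epsilon>. in_Dom_plus G f \<and> bdd_above (range f) \<and> b = (SUP x. f x) \<and>
         0 < a \<and> a < b \<and> finite {x. f x \<le> a} \<and> 0 < \<epsilon> \<and>
         (\<forall>x. x \<notin> {x. f x \<le> a} \<longrightarrow> gen_apply G f x \<le> - \<epsilon>)"
proof -
  obtain x0 :: 'a where True by blast
  obtain C where C0: "0 < C" and C: "\<And>x. x \<noteq> x0 \<Longrightarrow> exp_hitting_time G {x0} x \<le> ennreal C"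
    using ii[rule_format, of "{x0}"] by auto
  define u where "u x = (\<integral>\<^sup>+\<omega>. tau {x0} x \<omega> \<partial>Omega)" for x
  define h where "h x = enn2real (u x)" for x
  have "tau {x0} x0 = (\<lambda>\<omega>. 0)" by (rule ext) (simp add: tau_in)
  then have u0: "u x0 = 0" unfolding u_def by simp
  have uC: "u x \<le> ennreal C" for x
    using C[of x] u0 C0 by (cases "x = x0") (auto simp: u_def exp_tau)
  have uh: "u x = ennreal (h x)" for x
    using uC[of x] unfolding h_def by (metis ennreal_enn2real ennreal_less_top le_less_trans)
  have h0: "0 \<le> h x" for x unfolding h_def by simp
  have hC: "h x \<le> C" for x using uC[of x] uh[of x] C0 by (simp add: ennreal_le_iff)
  have hx0: "h x0 = 0" using u0 by (simp add: h_def)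
  have hs: "\<And>x. (\<lambda>v. G x v * h v) summable_on -{x}" by (rule Ksumm[OF h0 hC])
  have heq: "gam G x * h x = 1 + infsum (\<lambda>v. G x v * h v) (-{x})" if x: "x \<noteq> x0" for x
  proof -
    have "ennreal (h x) = ennreal (1 / gam G x) + (\<integral>\<^sup>+z. ennreal (jumpP G x z) * ennreal (h z) \<partial>count_space UNIV)"
      using E_tau_step[of x "{x0}"] x by (simp add: u_def[symmetric] uh)
    also have "\<dots> = ennreal (1 / gam G x) + ennreal (infsum (\<lambda>v. G x v * h v) (-{x}) / gam G x)"
      by (simp add: kernel_sum[OF h0 hs])
    also have "\<dots> = ennreal (1 / gam G x + infsum (\<lambda>v. G x v * h v) (-{x}) / gam G x)"
      using gam_pos[of x] G_nonneg h0
      by (intro ennreal_plus[symmetric]) (auto intro!: divide_nonneg_pos infsum_nonneg mult_nonneg_nonneg)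
    finally have "h x = 1 / gam G x + infsum (\<lambda>v. G x v * h v) (-{x}) / gam G x"
      using h0[of x] gam_pos[of x] G_nonneg h0
      by (subst (asm) ennreal_inj) (auto intro!: add_nonneg_nonneg divide_nonneg_pos infsum_nonneg mult_nonneg_nonneg)
    then show ?thesis using gam_pos[of x] by (simp add: field_simps)
  qed
  define ind where "ind z = (if z = x0 then 0 else 1::real)" for z
  define f where "f z = ind z + h z" for z
  have ind01: "0 \<le> ind z" "ind z \<le> 1" for z by (auto simp: ind_def)
  have f0: "0 \<le> f z" for z using ind01 h0 by (simp add: f_def)
  have fb: "f z \<le> 1 + C" for z using ind01 hC by (simp add: f_def add_mono)
  have is_: "\<And>x. (\<lambda>v. G x v * ind v) summable_on -{x}" by (rule Ksumm[OF ind01])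
  have dom: "in_Dom_plus G f"
    unfolding in_Dom_plus_def in_Dom_def using f0 Ksumm[OF f0 fb] by simp
  have bdd: "bdd_above (range f)" using fb by (auto intro!: bdd_aboveI)
  obtain x1 :: 'a where x1: "x1 \<noteq> x0" using inf by (metis UNIV_I finite.simps insertCI subsetI finite_subset)
  have "1 \<le> f x1" using x1 h0 by (simp add: f_def ind_def)
  also have "f x1 \<le> (SUP x. f x)" by (rule cSUP_upper[OF UNIV_I bdd])
  finally have b1: "1 \<le> (SUP x. f x)" .
  have fin: "{x. f x \<le> 1/2} \<subseteq> {x0}"
  proof
    fix x assume "x \<in> {x. f x \<le> 1/2}"
    then show "x \<in> {x0}" using h0[of x] by (cases "x = x0") (auto simp: f_def ind_def)
  qed
  have ga: "gen_apply G f x \<le> -1" if x: "x \<notin> {x. f x \<le> 1/2}" for x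
  proof -
    have xx: "x \<noteq> x0" using x hx0 by (auto simp: f_def ind_def)
    have "infsum (\<lambda>v. G x v * f v) (-{x}) = infsum (\<lambda>v. G x v * ind v) (-{x}) + infsum (\<lambda>v. G x v * h v) (-{x})"
      unfolding f_def distrib_left by (rule infsum_add[OF is_ hs])
    moreover have "infsum (\<lambda>v. G x v * ind v) (-{x}) \<le> infsum (\<lambda>v. G x v * 1) (-{x})"
      using G_nonneg ind01 by (intro infsum_mono is_ summable_on_cmult_left[OF G_summ] mult_left_mono) auto
    ultimately show ?thesis using heq[OF xx] xx unfolding gen_apply_def
      by (simp add: G_diag f_def ind_def gam_def algebra_simps)
  qed
  show ?thesis
    apply (rule exI[of _ f], rule exI[of _ "SUP x. f x"], rule exI[of _ "1/2"], rule exI[of _ 1])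
    using dom bdd b1 finite_subset[OF fin] ga by auto
qed

end


lemma infsum_diff_real:
  fixes f g :: "'b \<Rightarrow> real"
  assumes "f summable_on S" "g summable_on S"
  shows "infsum (\<lambda>x. f x - g x) S = infsum f S - infsum g S"
    and "(\<lambda>x. f x - g x) summable_on S"
proof -
  have g': "(\<lambda>x. - g x) summable_on S" using summable_on_cmult_right[OF assms(2), of "-1"] by simp
  show "infsum (\<lambda>x. f x - g x) S = infsum f S - infsum g S"
    using infsum_add[OF assms(1) g'] infsum_uminus[of g S] by simp
  show "(\<lambda>x. f x - g x) summable_on S" using summable_on_add[OF assms(1) g'] by simp
qed

lemma infsum_sum_real:
  fixes f :: "nat \<Rightarrow> 'b \<Rightarrow> real"
  assumes "finite F" "\<And>j. j \<in> F \<Longrightarrow> f j summable_on S"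
  shows "infsum (\<lambda>x. \<Sum>j\<in>F. f j x) S = (\<Sum>j\<in>F. infsum (f j) S) \<and> (\<lambda>x. \<Sum>j\<in>F. f j x) summable_on S"
  using assms
proof (induction F rule: finite_induct)
  case empty then show ?case by simp
next
  case (insert k F)
  then have IH: "infsum (\<lambda>x. \<Sum>j\<in>F. f j x) S = (\<Sum>j\<in>F. infsum (f j) S)"
      "(\<lambda>x. \<Sum>j\<in>F. f j x) summable_on S" and fk: "f k summable_on S" by auto
  show ?case using insert.hyps infsum_add[OF fk IH(2)] summable_on_add[OF fk IH(2)] IH(1) by simp
qed

context chain begin

primrec pj :: "'a set \<Rightarrow> nat \<Rightarrow> 'a \<Rightarrow> real" where
  "pj A 0 z = (if z \<in> A then 1 else 0)"
| "pj A (Suc j) z = (if z \<in> A then 1 else infsum (\<lambda>v. G z v * pj A j v) (-{z}) / gam G z)"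

lemma pi_bounds: "0 \<le> pj A j z \<and> pj A j z \<le> 1"
proof (induction j arbitrary: z)
  case 0 then show ?case by simp
next
  case (Suc j)
  show ?case
  proof (cases "z \<in> A")
    case False
    have s: "(\<lambda>v. G z v * pj A j v) summable_on -{z}" using Suc by (intro Ksumm) auto
    have "0 \<le> infsum (\<lambda>v. G z v * pj A j v) (-{z})"
      using Suc G_nonneg by (intro infsum_nonneg mult_nonneg_nonneg) auto
    moreover have "infsum (\<lambda>v. G z v * pj A j v) (-{z}) \<le> infsum (\<lambda>v. G z v * 1) (-{z})"
      using Suc G_nonneg by (intro infsum_mono s summable_on_cmult_left[OF G_summ] mult_left_mono) auto
    ultimately show ?thesis using False gam_pos[of z] by (simp add: gam_def)
  qed simp
qed

lemma pi_nonneg: "0 \<le> pj A j z" and pi_le1: "pj A j z \<le> 1" using pi_bounds by auto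

lemma pi_summ: "(\<lambda>v. G z v * pj A j v) summable_on -{z}"
  by (rule Ksumm[OF pi_nonneg pi_le1])

lemma pi_mono_Suc: "pj A j z \<le> pj A (Suc j) z"
proof (induction j arbitrary: z)
  case 0 show ?case using pi_nonneg[of A "Suc 0" z] by (cases "z \<in> A") auto
next
  case (Suc j)
  show ?case
  proof (cases "z \<in> A")
    case False
    have "infsum (\<lambda>v. G z v * pj A j v) (-{z}) \<le> infsum (\<lambda>v. G z v * pj A (Suc j) v) (-{z})"
      using Suc G_nonneg by (intro infsum_mono pi_summ mult_left_mono) auto
    then show ?thesis using False gam_pos[of z] by (simp add: divide_right_mono)
  qed simp
qed

lemma pi_mono: "j \<le> k \<Longrightarrow> pj A j z \<le> pj A k z"
  using lift_Suc_mono_le[of "\<lambda>j. pj A j z"] pi_mono_Suc by blast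

lemma pi_reach:
  assumes irr: "jump_irreducible G" and y: "y \<in> A"
  shows "\<exists>j. 0 < pj A j z"
proof -
  have "(\<lambda>u v. 0 < jumpP G u v)\<^sup>*\<^sup>* z y" using irr by (simp add: jump_irreducible_def)
  then show ?thesis
  proof (induction rule: converse_rtranclp_induct)
    case base then show ?case using y by (intro exI[of _ 0]) simp
  next
    case (step z w)
    then obtain j where j: "0 < pj A j w" by blast
    show ?case
    proof (cases "z \<in> A")
      case True then show ?thesis by (intro exI[of _ 0]) simp
    next
      case False
      have wz: "w \<noteq> z" using step.hyps(1) by auto
      have Gp: "0 < G z w" using step.hyps(1) wz gam_pos[of z] by (auto simp: jumpP_def zero_less_divide_iff)
      have "G z w * pj A j w = infsum (\<lambda>v. G z v * pj A j v) {w}" by simp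
      also have "\<dots> \<le> infsum (\<lambda>v. G z v * pj A j v) (-{z})"
        using wz G_nonneg pi_nonneg by (intro infsum_mono2 pi_summ) (auto intro!: mult_nonneg_nonneg)
      finally have "0 < infsum (\<lambda>v. G z v * pj A j v) (-{z})"
        using Gp j by (meson mult_pos_pos order_less_le_trans)
      then show ?thesis using False gam_pos[of z] by (intro exI[of _ "Suc j"]) simp
    qed
  qed
qed

end


context chain begin

lemma part1_i_ii:
  assumes irr: "jump_irreducible G" and rec: "jump_recurrent G"
    and fD: "in_Dom_plus G f" and fb: "bdd_above (range f)" and fin: "finite {x. f x \<le> a}"
    and e: "0 < \<epsilon>" and ga: "\<forall>x. x \<notin> {x. f x \<le> a} \<longrightarrow> gen_apply G f x \<le> - \<epsilon>"
    and A: "finite A" "A \<noteq> {}"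
  shows "\<exists>C>0. \<forall>x. x \<notin> A \<longrightarrow> exp_hitting_time G A x \<le> ennreal C"
proof -
  define b where "b = (SUP x. f x)"
  have f0: "0 \<le> f z" for z using fD by (simp add: in_Dom_plus_def)
  have fleb: "f z \<le> b" for z unfolding b_def by (rule cSUP_upper[OF UNIV_I fb])
  have fs: "(\<lambda>v. G z v * f v) summable_on -{z}" for z
    using fD f0 unfolding in_Dom_plus_def in_Dom_def by simp
  define Kf where "Kf z = infsum (\<lambda>v. G z v * f v) (-{z})" for z
  define F where "F = {x. f x \<le> a} - A"
  have Ffin: "finite F" using fin by (simp add: F_def)
  obtain y0 where y0: "y0 \<in> A" using A by blast
  define jf where "jf z = (SOME j. 0 < pj A j z)" for z
  have jf: "0 < pj A (jf z) z" for z unfolding jf_def using pi_reach[OF irr y0, of z] by (rule someI_ex)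
  define m where "m = Suc (Max (jf ` F))"
  have pm: "0 < pj A m z" if "z \<in> F" for z
  proof -
    have "jf z \<le> m" unfolding m_def using Ffin that by (simp add: le_SucI)
    then show ?thesis using jf[of z] pi_mono[of "jf z" m A z] by linarith
  qed
  define gp where "gp z = (\<Sum>j<m. 1 - pj A j z)" for z
  have gp0: "0 \<le> gp z" for z unfolding gp_def using pi_le1 by (intro sum_nonneg) auto
  have gpm: "gp z \<le> real m" for z
  proof -
    have "gp z \<le> (\<Sum>j<m. 1)" unfolding gp_def using pi_nonneg by (intro sum_mono) auto
    then show ?thesis by simp
  qed
  define c where "c z = 1 + (Kf z - gam G z * f z) / \<epsilon>" for z
  define L where "L = (\<Sum>z\<in>F. \<bar>c z\<bar> / (gam G z * pj A m z))"
  have gpn: "0 \<le> gam G z * pj A m z" for z using gam_pos[of z] pi_nonneg[of A m z] by simp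
  have L0: "0 \<le> L" unfolding L_def using gpn
    by (intro sum_nonneg divide_nonneg_nonneg) auto
  have cL: "c z \<le> L * (gam G z * pj A m z)" if z: "z \<notin> A" for z
  proof (cases "z \<in> F")
    case True
    have pos: "0 < gam G z * pj A m z" using gam_pos pm[OF True] by simp
    have "\<bar>c z\<bar> / (gam G z * pj A m z) \<le> L"
      unfolding L_def using Ffin True gam_pos pi_nonneg
      by (intro member_le_sum) (auto intro!: divide_nonneg_nonneg gpn)
    then have "\<bar>c z\<bar> \<le> L * (gam G z * pj A m z)" using pos by (simp add: pos_divide_le_eq)
    then show ?thesis by linarith
  next
    case False
    then have "\<not> f z \<le> a" using z by (auto simp: F_def)
    then have "gen_apply G f z \<le> - \<epsilon>" using ga by auto
    then have "Kf z - gam G z * f z \<le> - \<epsilon>" by (simp add: gen_apply_def G_diag Kf_def)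
    then have "(Kf z - gam G z * f z) / \<epsilon> \<le> - \<epsilon> / \<epsilon>" using e by (intro divide_right_mono) auto
    then have "c z \<le> 0" using e by (simp add: c_def)
    also have "0 \<le> L * (gam G z * pj A m z)" using L0 gam_pos pi_nonneg
      by (intro mult_nonneg_nonneg) (auto intro: less_imp_le)
    finally show ?thesis .
  qed
  define V where "V z = f z / \<epsilon> + L * gp z" for z
  define BV where "BV = b / \<epsilon> + L * real m"
  have V0: "0 \<le> V z" for z unfolding V_def using f0 e L0 gp0 by simp
  have VB: "V z \<le> BV" for z unfolding V_def BV_def using fleb e L0 gpm
    by (intro add_mono divide_right_mono mult_left_mono) auto
  define W where "W v = (if v \<in> A then 0 else V v)" for v
  have W0: "0 \<le> W v" for v using V0 by (simp add: W_def)
  have WB: "W v \<le> BV" for v using VB V0[of v] by (auto simp: W_def intro: order_trans)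
  have key: "1 + infsum (\<lambda>v. G z v * W v) (-{z}) \<le> gam G z * V z" if z: "z \<notin> A" for z
  proof -
    have gs: "(\<lambda>v. G z v * (1 - pj A j v)) summable_on -{z}" for j
      using pi_le1 pi_nonneg by (intro Ksumm[where c=1]) auto
    have K1p: "infsum (\<lambda>v. G z v * (1 - pj A j v)) (-{z}) = gam G z - gam G z * pj A (Suc j) z" for j
    proof -
      have "infsum (\<lambda>v. G z v * (1 - pj A j v)) (-{z}) = infsum (\<lambda>v. G z v * 1 - G z v * pj A j v) (-{z})"
        by (simp add: right_diff_distrib)
      also have "\<dots> = gam G z - infsum (\<lambda>v. G z v * pj A j v) (-{z})"
        using infsum_diff_real(1)[OF summable_on_cmult_left[OF G_summ, of z 1] pi_summ] by (simp add: gam_def)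
      also have "infsum (\<lambda>v. G z v * pj A j v) (-{z}) = gam G z * pj A (Suc j) z"
        using z gam_pos[of z] by simp
      finally show ?thesis .
    qed
    have Kgp: "infsum (\<lambda>v. G z v * gp v) (-{z}) = (\<Sum>j<m. gam G z - gam G z * pj A (Suc j) z)"
      and gps: "(\<lambda>v. G z v * gp v) summable_on -{z}"
    proof -
      have "(\<lambda>v. G z v * gp v) = (\<lambda>v. \<Sum>j<m. G z v * (1 - pj A j v))"
        by (simp add: gp_def sum_distrib_left)
      moreover note infsum_sum_real[of "{..<m}" "\<lambda>j v. G z v * (1 - pj A j v)" "-{z}", OF _ gs]
      ultimately show "infsum (\<lambda>v. G z v * gp v) (-{z}) = (\<Sum>j<m. gam G z - gam G z * pj A (Suc j) z)"
        and "(\<lambda>v. G z v * gp v) summable_on -{z}" by (simp_all add: K1p)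
    qed
    have tele: "(\<Sum>j<m. 1 - pj A (Suc j) z) = gp z - pj A m z"
    proof -
      have "(\<Sum>j<Suc m. 1 - pj A j z) = (1 - pj A 0 z) + (\<Sum>j<m. 1 - pj A (Suc j) z)"
        by (rule sum.lessThan_Suc_shift)
      moreover have "(\<Sum>j<Suc m. 1 - pj A j z) = gp z + (1 - pj A m z)" by (simp add: gp_def)
      ultimately show ?thesis using z by simp
    qed
    have Kgp2: "infsum (\<lambda>v. G z v * gp v) (-{z}) = gam G z * (gp z - pj A m z)"
      unfolding Kgp tele[symmetric] by (simp add: sum_distrib_left right_diff_distrib)
    have s1: "(\<lambda>v. G z v * f v / \<epsilon>) summable_on -{z}" by (rule summable_on_cdiv[OF fs])
    have s2: "(\<lambda>v. L * (G z v * gp v)) summable_on -{z}" by (rule summable_on_cmult_right[OF gps])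
    have "infsum (\<lambda>v. G z v * W v) (-{z}) \<le> infsum (\<lambda>v. G z v * f v / \<epsilon> + L * (G z v * gp v)) (-{z})"
    proof (rule infsum_mono)
      show "(\<lambda>v. G z v * W v) summable_on -{z}" by (rule Ksumm[OF W0 WB])
      show "(\<lambda>v. G z v * f v / \<epsilon> + L * (G z v * gp v)) summable_on -{z}" by (rule summable_on_add[OF s1 s2])
      fix v assume "v \<in> -{z}"
      then have "0 \<le> G z v" using G_nonneg by auto
      moreover have "W v \<le> f v / \<epsilon> + L * gp v" using V0[of v] by (auto simp: W_def V_def)
      ultimately have "G z v * W v \<le> G z v * (f v / \<epsilon> + L * gp v)" by (simp add: mult_left_mono)
      then show "G z v * W v \<le> G z v * f v / \<epsilon> + L * (G z v * gp v)" by (simp add: algebra_simps)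
    qed
    also have "\<dots> = Kf z / \<epsilon> + L * (gam G z * (gp z - pj A m z))"
      using infsum_add[OF s1 s2] infsum_cdiv[of "\<lambda>v. G z v * f v"]
        infsum_cmult_right'[of L "\<lambda>v. G z v * gp v" "-{z}"] Kgp2
      by (simp add: Kf_def)
    finally have "1 + infsum (\<lambda>v. G z v * W v) (-{z}) \<le> 1 + Kf z / \<epsilon> + L * (gam G z * (gp z - pj A m z))"
      by simp
    also have "\<dots> = c z + gam G z * f z / \<epsilon> + L * gam G z * gp z - L * (gam G z * pj A m z)"
      using e by (simp add: c_def algebra_simps diff_divide_distrib)
    also have "\<dots> \<le> gam G z * f z / \<epsilon> + L * gam G z * gp z" using cL[OF z] by simp
    also have "\<dots> = gam G z * V z" by (simp add: V_def algebra_simps)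
    finally show ?thesis .
  qed
  have hyp: "ennreal (1 / gam G z) + (\<integral>\<^sup>+v. ennreal (jumpP G z v) * (if v \<in> A then 0 else ennreal (V v)) \<partial>count_space UNIV)
      \<le> ennreal (V z)" if z: "z \<notin> A" for z
  proof -
    have "(\<integral>\<^sup>+v. ennreal (jumpP G z v) * (if v \<in> A then 0 else ennreal (V v)) \<partial>count_space UNIV)
        = (\<integral>\<^sup>+v. ennreal (jumpP G z v) * ennreal (W v) \<partial>count_space UNIV)"
      by (intro nn_integral_cong) (simp add: W_def)
    also have "\<dots> = ennreal (infsum (\<lambda>v. G z v * W v) (-{z}) / gam G z)"
      by (rule kernel_sum[OF W0 Ksumm[OF W0 WB]])
    finally have eq1: "(\<integral>\<^sup>+v. ennreal (jumpP G z v) * (if v \<in> A then 0 else ennreal (V v)) \<partial>count_space UNIV)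
        = ennreal (infsum (\<lambda>v. G z v * W v) (-{z}) / gam G z)" .
    have nn: "0 \<le> infsum (\<lambda>v. G z v * W v) (-{z})"
      using G_nonneg W0 by (intro infsum_nonneg mult_nonneg_nonneg) auto
    have "ennreal (1 / gam G z) + (\<integral>\<^sup>+v. ennreal (jumpP G z v) * (if v \<in> A then 0 else ennreal (V v)) \<partial>count_space UNIV)
       = ennreal (1 / gam G z + infsum (\<lambda>v. G z v * W v) (-{z}) / gam G z)"
      unfolding eq1 using nn gam_pos[of z] by (intro ennreal_plus[symmetric]) auto
    also have "\<dots> \<le> ennreal (V z)"
    proof (rule ennreal_leI)
      have "1 / gam G z + infsum (\<lambda>v. G z v * W v) (-{z}) / gam G z = (1 + infsum (\<lambda>v. G z v * W v) (-{z})) / gam G z"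
        by (simp add: add_divide_distrib)
      also have "\<dots> \<le> gam G z * V z / gam G z" using key[OF z] gam_pos[of z] by (intro divide_right_mono) auto
      also have "\<dots> = V z" using gam_pos[of z] by simp
      finally show "1 / gam G z + infsum (\<lambda>v. G z v * W v) (-{z}) / gam G z \<le> V z" .
    qed
    finally show ?thesis .
  qed
  have BV0: "0 \<le> BV" using V0 VB order_trans by blast
  show ?thesis
  proof (intro exI[of _ "BV + 1"] conjI allI impI)
    show "0 < BV + 1" using BV0 by simp
    fix x assume x: "x \<notin> A"
    have "exp_hitting_time G A x = (SUP n. \<integral>\<^sup>+\<omega>. TT A n x \<omega> \<partial>Omega)"
      unfolding exp_tau by (rule E_tau_SUP[OF AE_hit[OF irr rec A(2)]])
    also have "\<dots> \<le> ennreal (V x)"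
    proof (rule SUP_least)
      fix n show "(\<integral>\<^sup>+\<omega>. TT A n x \<omega> \<partial>Omega) \<le> ennreal (V x)"
        using compare[of A "\<lambda>v. ennreal (V v)", OF hyp, of n x] x by simp
    qed
    also have "\<dots> \<le> ennreal (BV + 1)" using VB[of x] by (intro ennreal_leI) simp
    finally show "exp_hitting_time G A x \<le> ennreal (BV + 1)" .
  qed
qed

end


context chain begin

lemma TT_sub: "B \<subseteq> S \<Longrightarrow> TT S n y \<omega> \<le> TT B n y \<omega>"
proof (induction n arbitrary: y \<omega>)
  case 0 then show ?case by simp
next
  case (Suc n)
  show ?case
  proof (cases "y \<in> S")
    case True then show ?thesis by simp
  next
    case False
    then have "y \<notin> B" using Suc.prems by auto
    then show ?thesis using False Suc.IH[OF Suc.prems] by (simp add: add_left_mono)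
  qed
qed

lemma TT_le_tau: "TT B n y \<omega> \<le> tau B y \<omega>"
  unfolding tau_def by (auto intro: SUP_upper)

lemma SS_notin_sub: "B \<subseteq> S \<Longrightarrow> SS S n y \<omega> \<notin> S \<Longrightarrow> SS B n y \<omega> \<notin> B"
proof (induction n arbitrary: y \<omega>)
  case 0 then show ?case by auto
next
  case (Suc n)
  show ?case
  proof (cases "y \<in> S")
    case True then show ?thesis using Suc.prems by simp
  next
    case False
    then have "y \<notin> B" using Suc.prems by auto
    then show ?thesis using False Suc by simp
  qed
qed

lemma SS_dec: "SS B (Suc n) y \<omega> \<notin> B \<Longrightarrow> SS B n y \<omega> \<notin> B"
proof (induction n arbitrary: y \<omega>)
  case 0 then show ?case by (cases "y \<in> B") auto
next
  case (Suc n)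
  show ?case
  proof (cases "y \<in> B")
    case True then show ?thesis using Suc.prems by simp
  next
    case False then show ?thesis using Suc by simp
  qed
qed

lemma SS_notin_jc: "SS B n y \<omega> \<notin> B \<Longrightarrow> jump_chain G y \<omega> n \<notin> B"
proof (induction n arbitrary: y \<omega>)
  case 0 then show ?case by simp
next
  case (Suc n)
  show ?case
  proof (cases "y \<in> B")
    case True then show ?thesis using Suc.prems by simp
  next
    case False then show ?thesis using Suc by (simp add: jc_Suc del: jump_chain.simps)
  qed
qed

lemma SS_set_meas[measurable]: "{\<omega>. SS B n y \<omega> \<notin> B} \<in> sets Omega"
proof -
  have "SS B n y -` (-B) \<inter> space Omega \<in> sets Omega" by (rule measurable_sets[OF SS_meas]) simp
  then show ?thesis by (simp add: vimage_def)
qed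

end


context chain begin

lemma part2:
  assumes fD: "in_Dom_plus G f" and fto: "\<forall>n::nat. finite {x. f x \<le> real n}"
    and a: "0 < a" and c: "0 < c" and e: "0 < \<epsilon>" and r: "1 < r"
    and frD: "in_Dom_plus G (\<lambda>x. f x powr r)"
    and g1: "\<forall>x. x \<notin> {x. f x \<le> a} \<longrightarrow> gen_apply G f x \<ge> - \<epsilon>"
    and g2: "\<forall>x. x \<notin> {x. f x \<le> a} \<longrightarrow> gen_apply G (\<lambda>x. f x powr r) x \<le> c * f x powr (r - 1)"
  shows "\<not> (\<exists>K>0. \<forall>x. x \<notin> {x. f x \<le> a} \<longrightarrow> exp_hitting_time G {x. f x \<le> a} x \<le> ennreal K)"
proof
  assume "\<exists>K>0. \<forall>x. x \<notin> {x. f x \<le> a} \<longrightarrow> exp_hitting_time G {x. f x \<le> a} x \<le> ennreal K"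
  then obtain K where K0: "0 < K" and K: "\<And>x. x \<notin> {x. f x \<le> a} \<Longrightarrow> exp_hitting_time G {x. f x \<le> a} x \<le> ennreal K"
    by blast
  define B where "B = {x. f x \<le> a}"
  have f0: "0 \<le> f z" for z using fD by (simp add: in_Dom_plus_def)
  have fs: "(\<lambda>v. G z v * f v) summable_on -{z}" for z
    using fD f0 unfolding in_Dom_plus_def in_Dom_def by simp
  have frs: "(\<lambda>v. G z v * f v powr r) summable_on -{z}" for z
    using frD unfolding in_Dom_plus_def in_Dom_def by simp
  define R where "R = a + (c + \<epsilon>) * K + 2"
  obtain x where fx: "R < f x"
  proof -
    have "\<exists>x. real (nat \<lceil>R\<rceil>) < f x"
    proof (rule ccontr)
      assume "\<not> ?thesis"
      then have "UNIV \<subseteq> {x. f x \<le> real (nat \<lceil>R\<rceil>)}" by (auto simp: not_less)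
      then show False using fto inf finite_subset by blast
    qed
    then obtain x where "real (nat \<lceil>R\<rceil>) < f x" by blast
    moreover have "R \<le> real (nat \<lceil>R\<rceil>)" by linarith
    ultimately have "R < f x" by linarith
    then show ?thesis by (rule that)
  qed
  have xB: "x \<notin> B" using fx a c e K0 by (simp add: B_def R_def) (smt (verit) mult_pos_pos)
  have Kx: "(\<integral>\<^sup>+\<omega>. tau B x \<omega> \<partial>Omega) \<le> ennreal K"
    using K[of x] xB by (simp add: B_def exp_tau)
  define M where "M = f x powr (r / (r - 1)) + f x + 1"
  have M1: "1 \<le> M" and fxM: "f x \<le> M" using f0[of x] by (auto simp: M_def)
  define M' where "M' = M powr (r - 1)"
  have M'0: "0 < M'" using M1 by (simp add: M'_def)
  have fxr: "f x powr r \<le> M'"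
  proof -
    have "f x powr r = (f x powr (r / (r - 1))) powr (r - 1)"
      using r by (simp add: powr_powr)
    also have "\<dots> \<le> M powr (r - 1)"
      using r f0[of x] by (intro powr_mono2) (auto simp: M_def)
    finally show ?thesis by (simp add: M'_def)
  qed
  define S where "S = B \<union> {z. M < f z}"
  have BS: "B \<subseteq> S" by (auto simp: S_def)
  have sub: "ennreal (f y) \<le> (\<integral>\<^sup>+\<omega>. ennreal (f (SS S n y \<omega>)) \<partial>Omega) + ennreal \<epsilon> * (\<integral>\<^sup>+\<omega>. TT S n y \<omega> \<partial>Omega)" for n y
  proof (induction n arbitrary: y)
    case 0 then show ?case by simp
  next
    case (Suc n)
    show ?case
    proof (cases "y \<in> S")
      case True then show ?thesis by (simp add: SS_in)
    next
      case False
      then have yB: "y \<notin> B" by (auto simp: S_def)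
      have gy: "gen_apply G f y \<ge> - \<epsilon>" using g1 yB by (auto simp: B_def)
      have "ennreal (f y) \<le> ennreal ((\<epsilon> + infsum (\<lambda>v. G y v * f v) (-{y})) / gam G y)"
        using gy gam_pos[of y] by (intro ennreal_leI) (simp add: gen_apply_def G_diag pos_le_divide_eq algebra_simps)
      also have "\<dots> = ennreal \<epsilon> * ennreal (1 / gam G y) + ennreal (infsum (\<lambda>v. G y v * f v) (-{y}) / gam G y)"
      proof -
        have "0 \<le> infsum (\<lambda>v. G y v * f v) (-{y})"
          using G_nonneg f0 by (intro infsum_nonneg mult_nonneg_nonneg) auto
        then show ?thesis using e gam_pos[of y]
          by (simp add: add_divide_distrib ennreal_mult'[symmetric] ennreal_plus[symmetric] del: ennreal_plus)
      qed
      also have "\<dots> = ennreal \<epsilon> * ennreal (1 / gam G y) + (\<integral>\<^sup>+z. ennreal (jumpP G y z) * ennreal (f z) \<partial>count_space UNIV)"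
        by (simp add: kernel_sum[OF f0 fs])
      also have "\<dots> \<le> ennreal \<epsilon> * ennreal (1 / gam G y) + (\<integral>\<^sup>+z. ennreal (jumpP G y z) *
          ((\<integral>\<^sup>+\<omega>. ennreal (f (SS S n z \<omega>)) \<partial>Omega) + ennreal \<epsilon> * (\<integral>\<^sup>+\<omega>. TT S n z \<omega> \<partial>Omega)) \<partial>count_space UNIV)"
        by (intro add_left_mono nn_integral_mono mult_left_mono Suc.IH) auto
      also have "\<dots> = ennreal \<epsilon> * ennreal (1 / gam G y) + (\<integral>\<^sup>+z. ennreal (jumpP G y z) * (\<integral>\<^sup>+\<omega>. ennreal (f (SS S n z \<omega>)) \<partial>Omega) \<partial>count_space UNIV)
          + ennreal \<epsilon> * (\<integral>\<^sup>+z. ennreal (jumpP G y z) * (\<integral>\<^sup>+\<omega>. TT S n z \<omega> \<partial>Omega) \<partial>count_space UNIV)"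
        by (simp add: distrib_left nn_integral_add nn_integral_cmult[symmetric] mult.left_commute add.assoc)
      also have "\<dots> = (\<integral>\<^sup>+\<omega>. ennreal (f (SS S (Suc n) y \<omega>)) \<partial>Omega) + ennreal \<epsilon> * (\<integral>\<^sup>+\<omega>. TT S (Suc n) y \<omega> \<partial>Omega)"
        unfolding E_SS_step[where \<phi>="\<lambda>z. ennreal (f z)", OF False] E_TT_step[OF False]
        by (simp add: distrib_left add_ac)
      finally show ?thesis .
    qed
  qed
  have mom: "(\<integral>\<^sup>+\<omega>. ennreal (f (SS S n y \<omega>) powr r) \<partial>Omega) \<le> ennreal (f y powr r) + ennreal (c * M') * (\<integral>\<^sup>+\<omega>. TT S n y \<omega> \<partial>Omega)" for n y
  proof (induction n arbitrary: y)
    case 0 then show ?case by simp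
  next
    case (Suc n)
    show ?case
    proof (cases "y \<in> S")
      case True then show ?thesis by (simp add: SS_in)
    next
      case False
      then have yB: "y \<notin> B" and yM: "f y \<le> M" by (auto simp: S_def)
      have gy: "gen_apply G (\<lambda>x. f x powr r) y \<le> c * f y powr (r - 1)" using g2 yB by (auto simp: B_def)
      have "f y powr (r - 1) \<le> M'" unfolding M'_def using yM f0[of y] r by (intro powr_mono2) auto
      then have gy2: "infsum (\<lambda>v. G y v * f v powr r) (-{y}) \<le> gam G y * f y powr r + c * M'"
        using gy c by (simp add: gen_apply_def G_diag) (smt (verit) mult_left_mono)
      have "(\<integral>\<^sup>+\<omega>. ennreal (f (SS S (Suc n) y \<omega>) powr r) \<partial>Omega)
          = (\<integral>\<^sup>+z. ennreal (jumpP G y z) * (\<integral>\<^sup>+\<omega>. ennreal (f (SS S n z \<omega>) powr r) \<partial>Omega) \<partial>count_space UNIV)"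
        using False by (rule E_SS_step[where \<phi>="\<lambda>z. ennreal (f z powr r)"])
      also have "\<dots> \<le> (\<integral>\<^sup>+z. ennreal (jumpP G y z) * (ennreal (f z powr r) + ennreal (c * M') * (\<integral>\<^sup>+\<omega>. TT S n z \<omega> \<partial>Omega)) \<partial>count_space UNIV)"
        by (intro nn_integral_mono mult_left_mono Suc.IH) auto
      also have "\<dots> = (\<integral>\<^sup>+z. ennreal (jumpP G y z) * ennreal (f z powr r) \<partial>count_space UNIV)
          + ennreal (c * M') * (\<integral>\<^sup>+z. ennreal (jumpP G y z) * (\<integral>\<^sup>+\<omega>. TT S n z \<omega> \<partial>Omega) \<partial>count_space UNIV)"
        by (simp add: distrib_left nn_integral_add nn_integral_cmult[symmetric] mult.left_commute)
      also have "(\<integral>\<^sup>+z. ennreal (jumpP G y z) * ennreal (f z powr r) \<partial>count_space UNIV)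
          = ennreal (infsum (\<lambda>v. G y v * f v powr r) (-{y}) / gam G y)"
        by (rule kernel_sum[OF _ frs]) simp
      also have "\<dots> \<le> ennreal (f y powr r + c * M' / gam G y)"
        using gy2 gam_pos[of y] by (intro ennreal_leI) (simp add: divide_le_eq algebra_simps)
      also have "\<dots> = ennreal (f y powr r) + ennreal (c * M') * ennreal (1 / gam G y)"
        using c M'0 gam_pos[of y] by (simp add: ennreal_mult'[symmetric])
      finally show ?thesis
        unfolding E_TT_step[OF False] by (simp add: distrib_left add_ac)
    qed
  qed
  have ET: "(\<integral>\<^sup>+\<omega>. TT S n x \<omega> \<partial>Omega) \<le> ennreal K" for n
  proof -
    have "(\<integral>\<^sup>+\<omega>. TT S n x \<omega> \<partial>Omega) \<le> (\<integral>\<^sup>+\<omega>. tau B x \<omega> \<partial>Omega)"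
      by (intro nn_integral_mono order_trans[OF TT_sub[OF BS] TT_le_tau])
    then show ?thesis using Kx by simp
  qed
  have ms: "{\<omega>. \<not> hit B x \<omega>} \<in> sets Omega"
  proof -
    have "UNIV - {\<omega>. hit B x \<omega>} \<in> sets Omega"
      using hit_set_meas[of B x] sets.compl_sets[of "{\<omega>. hit B x \<omega>}" Omega] by simp
    moreover have "UNIV - {\<omega>. hit B x \<omega>} = {\<omega>. \<not> hit B x \<omega>}" by blast
    ultimately show ?thesis by simp
  qed
  have nohit0: "emeasure Omega {\<omega>. \<not> hit B x \<omega>} = 0"
  proof (rule ccontr)
    assume ne: "emeasure Omega {\<omega>. \<not> hit B x \<omega>} \<noteq> 0"
    have "\<infinity> * emeasure Omega {\<omega>. \<not> hit B x \<omega>} = (\<integral>\<^sup>+\<omega>. \<infinity> * indicator {\<omega>. \<not> hit B x \<omega>} \<omega> \<partial>Omega)"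
      using ms by (simp add: nn_integral_cmult_indicator)
    also have "\<dots> \<le> (\<integral>\<^sup>+\<omega>. tau B x \<omega> \<partial>Omega)"
      by (intro nn_integral_mono) (auto simp: tau_def split: split_indicator)
    also have "\<dots> \<le> ennreal K" by (rule Kx)
    finally show False using ne by (simp add: ennreal_mult_eq_top_iff top_unique ennreal_top_mult)
  qed
  define D where "D n = {\<omega>. SS B n x \<omega> \<notin> B}" for n
  have Dlim: "(\<lambda>n. emeasure Omega (D n)) \<longlonglongrightarrow> 0"
  proof -
    have "(\<lambda>n. emeasure Omega (D n)) \<longlonglongrightarrow> emeasure Omega (\<Inter>n. D n)"
    proof (rule Lim_emeasure_decseq)
      show "range D \<subseteq> sets Omega" by (auto simp: D_def)
      show "decseq D"
      proof (rule decseq_SucI)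
        fix n show "D (Suc n) \<subseteq> D n" unfolding D_def using SS_dec[of B n x] by blast
      qed
      show "emeasure Omega (D i) \<noteq> \<infinity>" for i
        using prob_space.emeasure_le_1[OF Omega_prob, of "D i"] by (auto simp: top_unique)
    qed
    moreover have "emeasure Omega (\<Inter>n. D n) = 0"
    proof -
      have "(\<Inter>n. D n) \<subseteq> {\<omega>. \<not> hit B x \<omega>}"
        by (auto simp: D_def hit_def dest: SS_notin_jc)
      then have "emeasure Omega (\<Inter>n. D n) \<le> emeasure Omega {\<omega>. \<not> hit B x \<omega>}"
        by (intro emeasure_mono ms)
      then show ?thesis using nohit0 by simp
    qed
    ultimately show ?thesis by simp
  qed
  obtain n where Dn: "emeasure Omega (D n) < ennreal (1 / M)"
  proof -
    have "0 < ennreal (1 / M)" using M1 by simp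
    from order_tendstoD(2)[OF Dlim this] show ?thesis using that by (auto simp: eventually_sequentially)
  qed
  have pw: "ennreal (f z) \<le> ennreal a + ennreal (1 / M') * ennreal (f z powr r) + ennreal M * indicator (-S) z" for z
  proof (cases "z \<in> B")
    case True
    then have le: "ennreal (f z) \<le> ennreal a" by (simp add: B_def ennreal_leI)
    show ?thesis by (intro add_increasing2 zero_le le)
  next
    case False
    show ?thesis
    proof (cases "M < f z")
      case True
      have "M' \<le> f z powr (r - 1)" unfolding M'_def using True M1 r by (intro powr_mono2) auto
      then have "f z * M' \<le> f z * f z powr (r - 1)" using f0[of z] by (rule mult_left_mono)
      also have "\<dots> = f z powr r" using True M1 r by (simp add: powr_mult_base)
      finally have "f z \<le> 1 / M' * f z powr r" using M'0 by (simp add: field_simps)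
      then have "ennreal (f z) \<le> ennreal (1 / M') * ennreal (f z powr r)"
        using M'0 by (simp add: ennreal_mult'[symmetric] ennreal_leI)
      also have "\<dots> \<le> ennreal a + ennreal (1 / M') * ennreal (f z powr r)"
        by (rule add_increasing[OF zero_le order_refl])
      also have "\<dots> \<le> ennreal a + ennreal (1 / M') * ennreal (f z powr r) + ennreal M * indicator (-S) z"
        by (rule add_increasing2[OF zero_le order_refl])
      finally show ?thesis .
    next
      case False
      then have "z \<notin> S" using \<open>z \<notin> B\<close> by (auto simp: S_def)
      then have "ennreal (f z) \<le> ennreal M * indicator (-S) z" using False by (simp add: ennreal_leI)
      also have "\<dots> \<le> ennreal a + ennreal (1 / M') * ennreal (f z powr r) + ennreal M * indicator (-S) z"
        by (rule add_increasing[OF zero_le order_refl])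
      finally show ?thesis .
    qed
  qed
  have Sind: "indicator (-S) (SS S n x \<omega>) \<le> (indicator (D n) \<omega> :: ennreal)" for \<omega>
    using SS_notin_sub[OF BS, of n x \<omega>] by (auto simp: D_def split: split_indicator)
  have "ennreal (f x) \<le> (\<integral>\<^sup>+\<omega>. ennreal (f (SS S n x \<omega>)) \<partial>Omega) + ennreal \<epsilon> * ennreal K"
    using sub[of x n] ET[of n] by (meson add_left_mono mult_left_mono order_trans zero_le)
  also have "(\<integral>\<^sup>+\<omega>. ennreal (f (SS S n x \<omega>)) \<partial>Omega)
     \<le> (\<integral>\<^sup>+\<omega>. ennreal a + ennreal (1 / M') * ennreal (f (SS S n x \<omega>) powr r) + ennreal M * indicator (D n) \<omega> \<partial>Omega)"
    by (intro nn_integral_mono order_trans[OF pw] add_left_mono mult_left_mono Sind) auto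
  also have "\<dots> = ennreal a + ennreal (1 / M') * (\<integral>\<^sup>+\<omega>. ennreal (f (SS S n x \<omega>) powr r) \<partial>Omega) + ennreal M * emeasure Omega (D n)"
    by (simp add: nn_integral_add nn_integral_cmult nn_integral_cmult_indicator D_def)
  also have "\<dots> \<le> ennreal a + ennreal (1 / M') * (ennreal (f x powr r) + ennreal (c * M') * ennreal K) + ennreal M * ennreal (1 / M)"
    by (intro add_mono mult_left_mono order_refl order_trans[OF mom] ET less_imp_le[OF Dn]) auto
  finally have fin: "ennreal (f x) \<le> ennreal a + ennreal (1 / M') * (ennreal (f x powr r) + ennreal (c * M') * ennreal K)
      + ennreal M * ennreal (1 / M) + ennreal \<epsilon> * ennreal K" by (simp add: add_ac)
  have X0: "0 \<le> f x powr r" by simp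
  have q1: "ennreal (1 / M') * (ennreal (f x powr r) + ennreal (c * M') * ennreal K) = ennreal (f x powr r / M' + c * K)"
  proof -
    have "ennreal (f x powr r) + ennreal (c * M') * ennreal K = ennreal (f x powr r + c * M' * K)"
      using X0 c M'0 K0 by (simp add: ennreal_mult'[symmetric])
    moreover have "ennreal (1 / M') * ennreal (f x powr r + c * M' * K) = ennreal (1 / M' * (f x powr r + c * M' * K))"
      using M'0 by (simp add: ennreal_mult'[symmetric])
    moreover have "1 / M' * (f x powr r + c * M' * K) = f x powr r / M' + c * K" using M'0 by (simp add: field_simps)
    ultimately show ?thesis by simp
  qed
  have q2: "ennreal M * ennreal (1 / M) = 1" using M1 by (simp add: ennreal_mult'[symmetric])
  have q3: "ennreal \<epsilon> * ennreal K = ennreal (\<epsilon> * K)" using e by (simp add: ennreal_mult'[symmetric])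
  have "ennreal a + ennreal (1 / M') * (ennreal (f x powr r) + ennreal (c * M') * ennreal K)
      + ennreal M * ennreal (1 / M) + ennreal \<epsilon> * ennreal K = ennreal (a + (f x powr r / M' + c * K) + 1 + \<epsilon> * K)"
  proof -
    have Y0: "0 \<le> a + (f x powr r / M' + c * K)" using a X0 M'0 c K0
      by (intro add_nonneg_nonneg divide_nonneg_pos mult_nonneg_nonneg) auto
    have eK: "0 \<le> \<epsilon> * K" using e K0 by simp
    have "ennreal (a + (f x powr r / M' + c * K) + 1 + \<epsilon> * K)
        = ennreal (a + (f x powr r / M' + c * K) + 1) + ennreal (\<epsilon> * K)"
      using Y0 eK by (intro ennreal_plus) auto
    also have "ennreal (a + (f x powr r / M' + c * K) + 1) = ennreal (a + (f x powr r / M' + c * K)) + ennreal 1"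
      using Y0 by (intro ennreal_plus) auto
    finally have h1: "ennreal (a + (f x powr r / M' + c * K) + 1 + \<epsilon> * K)
        = ennreal (a + (f x powr r / M' + c * K)) + 1 + ennreal (\<epsilon> * K)" by simp
    have W0: "0 \<le> f x powr r / M' + c * K" using X0 M'0 c K0
      by (intro add_nonneg_nonneg divide_nonneg_pos mult_nonneg_nonneg) auto
    have h2: "ennreal (a + (f x powr r / M' + c * K)) = ennreal a + ennreal (f x powr r / M' + c * K)"
      using W0 a by (intro ennreal_plus) auto
    show ?thesis unfolding q1 q2 q3 h1 h2 ..
  qed
  with fin have "ennreal (f x) \<le> ennreal (a + (f x powr r / M' + c * K) + 1 + \<epsilon> * K)"
    by (rule ord_le_eq_trans)
  then have "f x \<le> a + (f x powr r / M' + c * K) + 1 + \<epsilon> * K"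
    using a M'0 c K0 e X0 by (subst (asm) ennreal_le_iff) (auto intro!: add_nonneg_nonneg divide_nonneg_pos)
  moreover have "f x powr r / M' \<le> 1" using fxr M'0 by simp
  ultimately show False using fx by (simp add: R_def algebra_simps)
qed

end

theorem theorem1p6:
  fixes G :: "'a::countable \<Rightarrow> 'a \<Rightarrow> real"
  assumes inf: "infinite (UNIV :: 'a set)"
    and gen: "is_generator G"
    and irr: "jump_irreducible G"
    and rec: "jump_recurrent G"
  shows
    "((\<exists>f b a \<epsilon>. in_Dom_plus G f \<and> bdd_above (range f) \<and> b = (SUP x. f x) \<and>
         0 < a \<and> a < b \<and> finite {x. f x \<le> a} \<and> 0 < \<epsilon> \<and>
         (\<forall>x. x \<notin> {x. f x \<le> a} \<longrightarrow> gen_apply G f x \<le> - \<epsilon>))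
      \<longleftrightarrow>
      (\<forall>A. finite A \<and> A \<noteq> {} \<longrightarrow>
         (\<exists>C>0. \<forall>x. x \<notin> A \<longrightarrow> exp_hitting_time G A x \<le> ennreal C)))
     \<and>
     (\<forall>f a c \<epsilon> r.
        in_Dom_plus G f \<and> (\<forall>n::nat. finite {x. f x \<le> real n}) \<and>
        0 < a \<and> 0 < c \<and> 0 < \<epsilon> \<and> 1 < r \<and>
        in_Dom_plus G (\<lambda>x. f x powr r) \<and>
        (\<forall>x. x \<notin> {x. f x \<le> a} \<longrightarrow> gen_apply G f x \<ge> - \<epsilon>) \<and>
        (\<forall>x. x \<notin> {x. f x \<le> a} \<longrightarrow>
             gen_apply G (\<lambda>x. f x powr r) x \<le> c * f x powr (r - 1))
      \<longrightarrow> \<not> (\<exists>K>0. \<forall>x. x \<notin> {x. f x \<le> a} \<longrightarrow>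
                      exp_hitting_time G {x. f x \<le> a} x \<le> ennreal K))"
  proof -
  have "chain G" using gen inf by (simp add: chain_def chain_axioms_def gctx_def)
  then interpret chain G .
  have P1: "(\<exists>f b a \<epsilon>. in_Dom_plus G f \<and> bdd_above (range f) \<and> b = (SUP x. f x) \<and>
         0 < a \<and> a < b \<and> finite {x. f x \<le> a} \<and> 0 < \<epsilon> \<and>
         (\<forall>x. x \<notin> {x. f x \<le> a} \<longrightarrow> gen_apply G f x \<le> - \<epsilon>))
      \<longleftrightarrow>
      (\<forall>A. finite A \<and> A \<noteq> {} \<longrightarrow>
         (\<exists>C>0. \<forall>x. x \<notin> A \<longrightarrow> exp_hitting_time G A x \<le> ennreal C))"
  proof
    assume "\<exists>f b a \<epsilon>. in_Dom_plus G f \<and> bdd_above (range f) \<and> b = (SUP x. f x) \<and>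
         0 < a \<and> a < b \<and> finite {x. f x \<le> a} \<and> 0 < \<epsilon> \<and>
         (\<forall>x. x \<notin> {x. f x \<le> a} \<longrightarrow> gen_apply G f x \<le> - \<epsilon>)"
    then obtain f b a \<epsilon> where fD: "in_Dom_plus G f" and fb: "bdd_above (range f)"
      and fin: "finite {x. f x \<le> a}" and e: "0 < \<epsilon>"
      and ga: "\<forall>x. x \<notin> {x. f x \<le> a} \<longrightarrow> gen_apply G f x \<le> - \<epsilon>" by blast
    show "\<forall>A. finite A \<and> A \<noteq> {} \<longrightarrow> (\<exists>C>0. \<forall>x. x \<notin> A \<longrightarrow> exp_hitting_time G A x \<le> ennreal C)"
      using part1_i_ii[OF irr rec fD fb fin e ga] by blast
  next
    assume "\<forall>A. finite A \<and> A \<noteq> {} \<longrightarrow> (\<exists>C>0. \<forall>x. x \<notin> A \<longrightarrow> exp_hitting_time G A x \<le> ennreal C)"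
    then show "\<exists>f b a \<epsilon>. in_Dom_plus G f \<and> bdd_above (range f) \<and> b = (SUP x. f x) \<and>
         0 < a \<and> a < b \<and> finite {x. f x \<le> a} \<and> 0 < \<epsilon> \<and>
         (\<forall>x. x \<notin> {x. f x \<le> a} \<longrightarrow> gen_apply G f x \<le> - \<epsilon>)"
      by (rule part1_ii_i)
  qed
  have P2: "\<forall>f a c \<epsilon> r.
        in_Dom_plus G f \<and> (\<forall>n::nat. finite {x. f x \<le> real n}) \<and>
        0 < a \<and> 0 < c \<and> 0 < \<epsilon> \<and> 1 < r \<and>
        in_Dom_plus G (\<lambda>x. f x powr r) \<and>
        (\<forall>x. x \<notin> {x. f x \<le> a} \<longrightarrow> gen_apply G f x \<ge> - \<epsilon>) \<and>
        (\<forall>x. x \<notin> {x. f x \<le> a} \<longrightarrow>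
             gen_apply G (\<lambda>x. f x powr r) x \<le> c * f x powr (r - 1))
      \<longrightarrow> \<not> (\<exists>K>0. \<forall>x. x \<notin> {x. f x \<le> a} \<longrightarrow>
                      exp_hitting_time G {x. f x \<le> a} x \<le> ennreal K)"
    using part2 by blast
  show ?thesis using P1 P2 by blast
qed

end
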